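(* Let $\left\{\mathcal{N}^{(i)}_{A \to B }\right\}_{i=1}^s$ be a compound quantum channel and let $\varepsilon \in (0,1)$. For any $(R,\varepsilon)$-entanglement assisted code for this compound quantum channel, it holds that $$R \leq \max _{|\psi\rangle\langle\psi|_{A A'}} \left( \min_{i \in [1:s]} \mathrm{I}^{\varepsilon}_{\mathrm{H}}(B:A')_{\mathcal{N}^{(i)}_{A \to B } (|\psi\rangle\langle\psi|_{AA'})} \right).$$
   Context: Here $A'\equiv A$ is a purifying register. For quantum states $\rho,\sigma$, $\mathrm{D}^{\varepsilon}_{\mathrm{H}}(\rho\|\sigma) := \max_{0\preceq M\preceq \mathbb{I},\ \mathrm{Tr}[M\rho]\geq 1-\varepsilon} -\log\mathrm{Tr}[M\sigma]$, and for a bipartite state $\rho_{BA'}$, $\mathrm{I}^{\varepsilon}_{\mathrm{H}}(B:A')_{\rho} := \min_{\sigma_B} \mathrm{D}^{\varepsilon}_{\mathrm{H}}(\rho_{BA'}\|\sigma_B\otimes\rho_{A'})$ over all quantum states $\sigma_B$. An $(R,\varepsilon)$-entanglement assisted code for the compound channel $\{\mathcal{N}^{(i)}_{A\to B}\}_{i=1}^s$ (channel index unknown to both parties) consists of a shared entangled state $|\theta\rangle_{E_AE_B}$, an encoding $\mathcal{E}: ME_A\to A$ (messages in $[1:2^R]$) and a decoding $\mathcal{D}: BE_B\to M'$, with $\Pr\{M'\neq m\mid M=m\}\leq\varepsilon$ for all messages $m$ and all $i\in[1:s]$. *)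

theory Defs
  imports "HOL-Analysis.Analysis"
begin

text \<open>Finite-dimensional quantum systems are modelled by a finite basis type 'a;
  an operator on the system is its matrix with respect to that basis.\<close>

type_synonym 'a qop = "'a \<Rightarrow> 'a \<Rightarrow> complex"

definition qtrace :: "('a::finite) qop \<Rightarrow> complex" where
  "qtrace X = (\<Sum>i\<in>UNIV. X i i)"

definition qmult :: "('a::finite) qop \<Rightarrow> 'a qop \<Rightarrow> 'a qop" where
  "qmult X Y = (\<lambda>i j. \<Sum>k\<in>UNIV. X i k * Y k j)"

definition qid :: "'a qop" where
  "qid = (\<lambda>i j. if i = j then 1 else 0)"

definition qtensor :: "'a qop \<Rightarrow> 'b qop \<Rightarrow> ('a \<times> 'b) qop" where
  "qtensor X Y = (\<lambda>(a,b) (a',b'). X a a' * Y b b')"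

definition ptrace1 :: "(('a::finite) \<times> 'b) qop \<Rightarrow> 'b qop" where
  "ptrace1 X = (\<lambda>b b'. \<Sum>a\<in>UNIV. X (a,b) (a,b'))"

definition ketbra :: "('a \<Rightarrow> complex) \<Rightarrow> 'a qop" where
  "ketbra v = (\<lambda>i j. v i * cnj (v j))"

definition unit_vec :: "(('a::finite) \<Rightarrow> complex) \<Rightarrow> bool" where
  "unit_vec v \<longleftrightarrow> (\<Sum>i\<in>UNIV. cmod (v i) ^ 2) = 1"

definition psd_on :: "'a set \<Rightarrow> 'a qop \<Rightarrow> bool" where
  "psd_on S X \<longleftrightarrow> (\<forall>v::'a \<Rightarrow> complex.
     (let q = (\<Sum>i\<in>S. \<Sum>j\<in>S. cnj (v i) * X i j * v j) in Im q = 0 \<and> Re q \<ge> 0))"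

abbreviation psd :: "('a::finite) qop \<Rightarrow> bool" where
  "psd X \<equiv> psd_on UNIV X"

definition density :: "('a::finite) qop \<Rightarrow> bool" where
  "density \<rho> \<longleftrightarrow> psd \<rho> \<and> qtrace \<rho> = 1"

text \<open>Complete positivity: for every ancilla dimension n, id_n \<otimes> N maps positive
  operators on (ancilla \<otimes> input) to positive operators. For a linear N the
  action of id_n \<otimes> N is blockwise: the (i,j) block of the output is N applied
  to the (i,j) block of the input.\<close>
definition qlinear :: "('a qop \<Rightarrow> 'b qop) \<Rightarrow> bool" where
  "qlinear N \<longleftrightarrow> (\<forall>X Y. N (\<lambda>i j. X i j + Y i j) = (\<lambda>i j. N X i j + N Y i j))
                 \<and> (\<forall>c X. N (\<lambda>i j. c * X i j) = (\<lambda>i j. c * N X i j))"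

definition completely_positive :: "(('a::finite) qop \<Rightarrow> ('b::finite) qop) \<Rightarrow> bool" where
  "completely_positive N \<longleftrightarrow> (\<forall>n::nat. \<forall>X :: (nat \<times> 'a) qop.
     psd_on ({..<n} \<times> UNIV) X \<longrightarrow>
     psd_on ({..<n} \<times> UNIV)
       (\<lambda>(i,b) (j,b'). N (\<lambda>a a'. X (i,a) (j,a')) b b'))"

definition channel :: "(('a::finite) qop \<Rightarrow> ('b::finite) qop) \<Rightarrow> bool" where
  "channel N \<longleftrightarrow> qlinear N \<and> completely_positive N \<and> (\<forall>X. qtrace (N X) = qtrace X)"

definition apply_first :: "('a qop \<Rightarrow> 'b qop) \<Rightarrow> ('a \<times> 'c) qop \<Rightarrow> ('b \<times> 'c) qop" where
  "apply_first N X = (\<lambda>(b,c) (b',c'). N (\<lambda>a a'. X (a,c) (a',c')) b b')"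

definition neglog2 :: "real \<Rightarrow> ereal" where
  "neglog2 t = (if t = 0 then \<infinity> else ereal (- log 2 t))"

definition DH :: "real \<Rightarrow> ('a::finite) qop \<Rightarrow> 'a qop \<Rightarrow> ereal" where
  "DH \<epsilon> \<rho> \<sigma> = Sup { neglog2 (Re (qtrace (qmult M \<sigma>))) | M.
       psd M \<and> psd (\<lambda>i j. qid i j - M i j) \<and> Re (qtrace (qmult M \<rho>)) \<ge> 1 - \<epsilon> }"

definition IH :: "real \<Rightarrow> (('b::finite) \<times> ('a::finite)) qop \<Rightarrow> ereal" where
  "IH \<epsilon> \<rho> = Inf { DH \<epsilon> \<rho> (qtensor \<sigma> (ptrace1 \<rho>)) | \<sigma> :: 'b qop. density \<sigma> }"

definition povm :: "nat \<Rightarrow> (nat \<Rightarrow> ('a::finite) qop) \<Rightarrow> bool" where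
  "povm K D \<longleftrightarrow> (\<forall>m\<in>{1..K}. psd (D m)) \<and> (\<lambda>i j. \<Sum>m\<in>{1..K}. D m i j) = qid"

text \<open>Entanglement-assisted code with K messages for the compound channel
  {N i}_{i=1..s}: shared pure state theta on E_A \<otimes> E_B, encoding channels
  Enc m : E_A \<rightarrow> A for each message m, decoding POVM Dec on B \<otimes> E_B, with
  error probability at most eps for every message and every channel index.\<close>
definition EA_code ::
  "nat \<Rightarrow> real \<Rightarrow> nat \<Rightarrow> (nat \<Rightarrow> ('a::finite) qop \<Rightarrow> ('b::finite) qop)
   \<Rightarrow> (('ea::finite) \<times> ('eb::finite) \<Rightarrow> complex)
   \<Rightarrow> (nat \<Rightarrow> 'ea qop \<Rightarrow> 'a qop) \<Rightarrow> (nat \<Rightarrow> ('b \<times> 'eb) qop) \<Rightarrow> bool" where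
  "EA_code K \<epsilon> s N \<theta> Enc Dec \<longleftrightarrow>
     unit_vec \<theta> \<and> (\<forall>m\<in>{1..K}. channel (Enc m)) \<and> povm K Dec \<and>
     (\<forall>m\<in>{1..K}. \<forall>i\<in>{1..s}.
        1 - Re (qtrace (qmult (Dec m)
                 (apply_first (N i) (apply_first (Enc m) (ketbra \<theta>))))) \<le> \<epsilon>)"

end

theory Submission
  imports Defs
begin

definition qf :: "'s set \<Rightarrow> ('s \<Rightarrow> 's \<Rightarrow> complex) \<Rightarrow> ('s \<Rightarrow> complex) \<Rightarrow> complex" where
  "qf S X v = (\<Sum>i\<in>S. \<Sum>j\<in>S. cnj (v i) * X i j * v j)"

lemma psd_on_qf: "psd_on S X \<longleftrightarrow> (\<forall>v. Im (qf S X v) = 0 \<and> Re (qf S X v) \<ge> 0)"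
  unfolding psd_on_def qf_def Let_def by simp

lemma qf_supp:
  assumes "finite S" "T \<subseteq> S" "\<And>i. i \<notin> T \<Longrightarrow> v i = 0"
  shows "qf S X v = qf T X v"
proof -
  have "qf S X v = (\<Sum>i\<in>T. \<Sum>j\<in>S. cnj (v i) * X i j * v j)"
    unfolding qf_def by (rule sum.mono_neutral_right) (use assms in auto)
  also have "\<dots> = qf T X v"
    unfolding qf_def
    by (rule sum.cong[OF refl], rule sum.mono_neutral_right) (use assms in auto)
  finally show ?thesis .
qed

lemma qf_two:
  assumes "finite S" "i \<in> S" "j \<in> S" "i \<noteq> j"
  shows "qf S X (\<lambda>k. if k = i then \<alpha> else if k = j then \<beta> else 0) =
    cnj \<alpha> * X i i * \<alpha> + cnj \<alpha> * X i j * \<beta> + cnj \<beta> * X j i * \<alpha> + cnj \<beta> * X j j * \<beta>"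
proof -
  have "qf S X (\<lambda>k. if k = i then \<alpha> else if k = j then \<beta> else 0) =
        qf {i,j} X (\<lambda>k. if k = i then \<alpha> else if k = j then \<beta> else 0)"
    by (rule qf_supp) (use assms in auto)
  also have "\<dots> = cnj \<alpha> * X i i * \<alpha> + cnj \<alpha> * X i j * \<beta> + cnj \<beta> * X j i * \<alpha> + cnj \<beta> * X j j * \<beta>" unfolding qf_def using assms(4) by (simp add: algebra_simps)
  finally show ?thesis .
qed

lemma qf_one:
  assumes "finite S" "i \<in> S"
  shows "qf S X (\<lambda>k. if k = i then \<alpha> else 0) = cnj \<alpha> * X i i * \<alpha>"
proof -
  have "qf S X (\<lambda>k. if k = i then \<alpha> else 0) = qf {i} X (\<lambda>k. if k = i then \<alpha> else 0)"
    by (rule qf_supp) (use assms in auto)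
  also have "\<dots> = cnj \<alpha> * X i i * \<alpha>" unfolding qf_def by simp
  finally show ?thesis .
qed

lemma psd_diag:
  assumes "finite S" "psd_on S X" "i \<in> S"
  shows "Im (X i i) = 0" "Re (X i i) \<ge> 0"
  using assms qf_one[OF assms(1,3), of X 1] unfolding psd_on_qf
  by (metis complex_cnj_one mult.right_neutral mult_1)+

lemma psd_herm:
  assumes "finite S" "psd_on S X" "i \<in> S" "j \<in> S"
  shows "X i j = cnj (X j i)"
proof (cases "i = j")
  case True
  then show ?thesis using psd_diag[OF assms(1,2,3)] by (simp add: complex_eq_iff)
next
  case False
  have d: "Im (X i i) = 0" "Im (X j j) = 0" using psd_diag(1)[OF assms(1,2)] assms(3,4) by blast+
  have 1: "Im (qf S X (\<lambda>k. if k = i then 1 else if k = j then 1 else 0)) = 0"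
    using assms(2) unfolding psd_on_qf by blast
  have 2: "Im (qf S X (\<lambda>k. if k = i then 1 else if k = j then \<i> else 0)) = 0"
    using assms(2) unfolding psd_on_qf by blast
  from 1 2 d show ?thesis
    unfolding qf_two[OF assms(1,3,4) False] by (simp add: complex_eq_iff)
qed

lemma psd_zero_row:
  assumes "finite S" "psd_on S X" "p \<in> S" "j \<in> S" "X p p = 0"
  shows "X p j = 0"
proof (rule ccontr)
  assume ne: "X p j \<noteq> 0"
  then have pj: "p \<noteq> j" using assms by auto
  define r where "r = (Re (X j j) + 1) / (2 * (cmod (X p j))^2)"
  have rpos: "r > 0" unfolding r_def using psd_diag(2)[OF assms(1,2,4)] ne
    by (intro divide_pos_pos) auto
  have h: "X j p = cnj (X p j)" using psd_herm[OF assms(1,2,4,3)] .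
  have "Re (qf S X (\<lambda>k. if k = p then - (of_real r * X p j) else if k = j then 1 else 0)) \<ge> 0"
    using assms(2) unfolding psd_on_qf by blast
  also have "Re (qf S X (\<lambda>k. if k = p then - (of_real r * X p j) else if k = j then 1 else 0))
      = Re (X j j) - 2 * r * (cmod (X p j))^2"
    unfolding qf_two[OF assms(1,3,4) pj] using assms(5) h
    by (simp add: cmod_power2 algebra_simps power2_eq_square[of "Re _"] power2_eq_square[of "Im _"])
  finally have "2 * r * (cmod (X p j))^2 \<le> Re (X j j)" by simp
  moreover have "2 * r * (cmod (X p j))^2 = Re (X j j) + 1" unfolding r_def using ne by simp
  ultimately show False by simp
qed

lemma psd_subset:
  assumes "finite S" "T \<subseteq> S" "psd_on S X"
  shows "psd_on T X"
  unfolding psd_on_qf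
proof
  fix v :: "'a \<Rightarrow> complex"
  define v' where "v' = (\<lambda>i. if i \<in> T then v i else 0)"
  have "qf S X v' = qf T X v'" by (rule qf_supp) (use assms in \<open>auto simp: v'_def\<close>)
  also have "qf T X v' = qf T X v" unfolding qf_def v'_def by (rule sum.cong) auto
  finally show "Im (qf T X v) = 0 \<and> 0 \<le> Re (qf T X v)"
    using assms(3) unfolding psd_on_qf by metis
qed

lemma qf_gram:
  "qf S (\<lambda>i j. \<Sum>k\<in>K. f k i * cnj (f k j)) v =
   (\<Sum>k\<in>K. of_real ((cmod (\<Sum>i\<in>S. cnj (v i) * f k i))^2))"
proof -
  have "qf S (\<lambda>i j. \<Sum>k\<in>K. f k i * cnj (f k j)) v =
     (\<Sum>i\<in>S. \<Sum>j\<in>S. \<Sum>k\<in>K. (cnj (v i) * f k i) * cnj (cnj (v j) * f k j))"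
    unfolding qf_def by (simp add: sum_distrib_left sum_distrib_right mult_ac)
  also have "\<dots> = (\<Sum>k\<in>K. (\<Sum>i\<in>S. cnj (v i) * f k i) * cnj (\<Sum>j\<in>S. cnj (v j) * f k j))"
  proof -
    have "(\<Sum>i\<in>S. \<Sum>j\<in>S. \<Sum>k\<in>K. (cnj (v i) * f k i) * cnj (cnj (v j) * f k j))
       = (\<Sum>i\<in>S. \<Sum>k\<in>K. \<Sum>j\<in>S. (cnj (v i) * f k i) * cnj (cnj (v j) * f k j))"
      by (rule sum.cong[OF refl], rule sum.swap)
    also have "\<dots> = (\<Sum>k\<in>K. \<Sum>i\<in>S. \<Sum>j\<in>S. (cnj (v i) * f k i) * cnj (cnj (v j) * f k j))"
      by (rule sum.swap)
    also have "\<dots> = (\<Sum>k\<in>K. (\<Sum>i\<in>S. cnj (v i) * f k i) * cnj (\<Sum>j\<in>S. cnj (v j) * f k j))"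
      by (rule sum.cong[OF refl]) (simp add: sum_product[symmetric] cnj_sum)
    finally show ?thesis .
  qed
  also have "\<dots> = (\<Sum>k\<in>K. of_real ((cmod (\<Sum>i\<in>S. cnj (v i) * f k i))^2))"
    by (simp only: complex_norm_square)
  finally show ?thesis .
qed

lemma gram_psd: "psd_on S (\<lambda>i j. \<Sum>k\<in>K. f k i * cnj (f k j))"
  unfolding psd_on_qf qf_gram by (simp add: sum_nonneg)

lemma schur_psd:
  assumes fin: "finite S" and pS: "p \<in> S" and psd: "psd_on S X" and d0: "X p p \<noteq> 0"
  defines "c \<equiv> sqrt (Re (X p p))"
  shows "psd_on (S - {p}) (\<lambda>i j. X i j - (X i p / of_real c) * cnj (X j p / of_real c))"
  unfolding psd_on_qf
proof
  fix v
  define S' where "S' = S - {p}"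
  define d where "d = X p p"
  have dreal: "d = of_real (Re (X p p))" using psd_diag(1)[OF fin psd pS]
    unfolding d_def by (simp add: complex_eq_iff)
  have dpos: "Re (X p p) > 0" using psd_diag[OF fin psd pS] d0
  proof -
    have "Re (X p p) \<noteq> 0" using d0 psd_diag(1)[OF fin psd pS] by (auto simp: complex_eq_iff)
    then show ?thesis using psd_diag(2)[OF fin psd pS] by simp
  qed
  have cc: "of_real c * of_real c = d" unfolding c_def dreal using dpos
    by (simp flip: of_real_mult)
  have cnz: "(of_real c :: complex) \<noteq> 0" unfolding c_def using dpos by simp
  have dnz: "d \<noteq> 0" using d0 d_def by simp
  have cd: "cnj d = d" using dreal by simp
  have herm: "\<And>i j. i \<in> S \<Longrightarrow> j \<in> S \<Longrightarrow> X i j = cnj (X j i)"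
    by (rule psd_herm[OF fin psd])
  define c0 where "c0 = (\<Sum>j\<in>S'. X p j * v j)"
  have e: "(\<Sum>i\<in>S'. cnj (v i) * X i p) = cnj c0"
    unfolding c0_def cnj_sum
  proof (rule sum.cong[OF refl])
    fix i assume "i \<in> S'" then have "X i p = cnj (X p i)" by (intro herm) (use pS S'_def in auto)
    then show "cnj (v i) * X i p = cnj (X p i * v i)" by simp
  qed
  define Q where "Q = qf S' X v"
  define v' where "v' = (\<lambda>i. if i = p then - c0 / d else v i)"
  have finS': "finite S'" using fin S'_def by simp
  have Sins: "S = insert p S'" "p \<notin> S'" using pS S'_def by auto
  have v'S: "\<And>i. i \<in> S' \<Longrightarrow> v' i = v i" unfolding v'_def S'_def by auto
  have "qf S X v' = cnj (v' p) * X p p * v' p + (\<Sum>j\<in>S'. cnj (v' p) * X p j * v' j)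
      + ((\<Sum>i\<in>S'. cnj (v' i) * X i p * v' p) + (\<Sum>i\<in>S'. \<Sum>j\<in>S'. cnj (v' i) * X i j * v' j))"
    unfolding qf_def Sins(1) using Sins(2) finS'
    by (simp add: sum.insert sum.distrib)
  also have "(\<Sum>j\<in>S'. cnj (v' p) * X p j * v' j) = cnj (v' p) * c0"
    unfolding c0_def sum_distrib_left using v'S by (auto intro!: sum.cong simp: mult_ac)
  also have "(\<Sum>i\<in>S'. cnj (v' i) * X i p * v' p) = cnj c0 * v' p"
    unfolding e[symmetric] sum_distrib_right using v'S by (auto intro!: sum.cong simp: mult_ac)
  also have "(\<Sum>i\<in>S'. \<Sum>j\<in>S'. cnj (v' i) * X i j * v' j) = Q"
    unfolding Q_def qf_def using v'S by (auto intro!: sum.cong)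
  also have "v' p = - c0 / d" unfolding v'_def by simp
  finally have 1: "qf S X v' = Q - cnj c0 * c0 / d"
    using dnz cd unfolding d_def[symmetric]
    by (simp add: field_simps)
  have "qf S' (\<lambda>i j. X i j - (X i p / of_real c) * cnj (X j p / of_real c)) v
      = Q - (\<Sum>i\<in>S'. \<Sum>j\<in>S'. (cnj (v i) * X i p / of_real c) * (cnj (X j p) * v j / of_real c))"
    unfolding Q_def qf_def by (simp add: sum_subtractf algebra_simps)
  also have "(\<Sum>i\<in>S'. \<Sum>j\<in>S'. (cnj (v i) * X i p / of_real c) * (cnj (X j p) * v j / of_real c))
      = (\<Sum>i\<in>S'. cnj (v i) * X i p / of_real c) * (\<Sum>j\<in>S'. cnj (X j p) * v j / of_real c)"
    by (simp add: sum_product)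
  also have "(\<Sum>i\<in>S'. cnj (v i) * X i p / of_real c) = cnj c0 / of_real c"
    unfolding e[symmetric] by (simp add: sum_divide_distrib)
  also have "(\<Sum>j\<in>S'. cnj (X j p) * v j / of_real c) = c0 / of_real c"
    unfolding c0_def sum_divide_distrib
  proof (rule sum.cong[OF refl])
    fix i assume "i \<in> S'" then have "X p i = cnj (X i p)" by (intro herm) (use pS S'_def in auto)
    then show "cnj (X i p) * v i / of_real c = X p i * v i / of_real c" by simp
  qed
  finally have 2: "qf S' (\<lambda>i j. X i j - (X i p / of_real c) * cnj (X j p / of_real c)) v
      = Q - cnj c0 * c0 / d"
    using cc cnz by (simp add: field_simps)
  have "Im (qf S X v') = 0 \<and> Re (qf S X v') \<ge> 0" using psd unfolding psd_on_qf by blast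
  then show "Im (qf (S - {p}) (\<lambda>i j. X i j - (X i p / of_real c) * cnj (X j p / of_real c)) v) = 0 \<and>
     Re (qf (S - {p}) (\<lambda>i j. X i j - (X i p / of_real c) * cnj (X j p / of_real c)) v) \<ge> 0"
    using 1 2 unfolding S'_def by simp
qed

lemma chol:
  assumes "finite S" "P \<subseteq> S" "psd_on S X"
  shows "\<exists>u. (\<forall>i\<in>S. \<forall>j\<in>S. X i j = (\<Sum>k\<in>S. u k i * cnj (u k j))) \<and> (\<forall>k\<in>S-P. \<forall>i\<in>P. u k i = 0)"
  using assms
proof (induction "card S" arbitrary: S P X)
  case 0
  then have "S = {}" by simp
  then show ?case using 0 by auto
next
  case (Suc n)
  note fin = Suc.prems(1) and PS = Suc.prems(2) and psd = Suc.prems(3)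
  have "S \<noteq> {}" using Suc.hyps(2) by auto
  then obtain p where pS: "p \<in> S" and pP: "P \<noteq> {} \<Longrightarrow> p \<in> P"
    using PS by (cases "P = {}") auto
  define S' where "S' = S - {p}"
  define P' where "P' = P - {p}"
  define c where "c = sqrt (Re (X p p))"
  define up where "up = (if X p p = 0 then (\<lambda>_. 0) else (\<lambda>i. X i p / of_real c))"
  define X' where "X' = (\<lambda>i j. X i j - up i * cnj (up j))"
  have herm: "\<And>i j. i \<in> S \<Longrightarrow> j \<in> S \<Longrightarrow> X i j = cnj (X j i)"
    by (rule psd_herm[OF fin psd])
  have psd': "psd_on S' X'"
  proof (cases "X p p = 0")
    case True
    then have "X' = X" unfolding X'_def up_def by simp
    then show ?thesis using psd_subset[OF fin _ psd, of S'] S'_def by auto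
  next
    case False
    then show ?thesis using schur_psd[OF fin pS psd False]
      unfolding X'_def up_def c_def S'_def by simp
  qed
  have cardS': "n = card S'" using Suc.hyps(2) fin pS S'_def by simp
  have finS': "finite S'" using fin S'_def by simp
  have P'S': "P' \<subseteq> S'" using PS S'_def P'_def by auto
  obtain u' where u'1: "\<forall>i\<in>S'. \<forall>j\<in>S'. X' i j = (\<Sum>k\<in>S'. u' k i * cnj (u' k j))"
    and u'2: "\<forall>k\<in>S'-P'. \<forall>i\<in>P'. u' k i = 0"
    using Suc.hyps(1)[OF cardS' finS' P'S' psd'] by blast
  define u where "u = (\<lambda>k. if k = p then up else (\<lambda>i. if i = p then 0 else u' k i))"
  have Sins: "S = insert p S'" "p \<notin> S'" using pS S'_def by auto
  have sumS: "(\<Sum>k\<in>S. u k i * cnj (u k j)) = up i * cnj (up j) +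
      (\<Sum>k\<in>S'. (if i = p then 0 else u' k i) * cnj (if j = p then 0 else u' k j))" for i j
    unfolding Sins(1) using Sins(2) finS' by (simp add: u_def sum.insert, intro sum.cong) auto
  have upp: "up p * cnj (up j) = X p j" if "j \<in> S" for j
  proof (cases "X p p = 0")
    case True
    then show ?thesis using psd_zero_row[OF fin psd pS that] unfolding up_def by simp
  next
    case False
    have im: "Im (X p p) = 0" and re: "Re (X p p) \<ge> 0" using psd_diag[OF fin psd pS] by auto
    have cc: "of_real c * of_real c = X p p" unfolding c_def using im re
      by (simp flip: of_real_mult add: complex_eq_iff)
    have cnz: "(of_real c :: complex) \<noteq> 0" using cc False by auto
    have "up p * cnj (up j) = (X p p / of_real c) * (cnj (X j p) / of_real c)"
      unfolding up_def using False by simp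
    also have "cnj (X j p) = X p j" using herm[OF pS that] by simp
    finally show ?thesis using cc cnz False by (simp add: field_simps)
  qed
  have dec: "\<forall>i\<in>S. \<forall>j\<in>S. X i j = (\<Sum>k\<in>S. u k i * cnj (u k j))"
  proof (intro ballI)
    fix i j assume i: "i \<in> S" and j: "j \<in> S"
    show "X i j = (\<Sum>k\<in>S. u k i * cnj (u k j))"
    proof (cases "i = p")
      case True
      then show ?thesis unfolding sumS using upp[OF j] by simp
    next
      case ip: False
      show ?thesis
      proof (cases "j = p")
        case True
        have "up i * cnj (up p) = cnj (up p * cnj (up i))" by simp
        also have "\<dots> = cnj (X p i)" using upp[OF i] by simp
        also have "\<dots> = X i p" using herm[OF i pS] by simp
        finally show ?thesis unfolding sumS using True ip by simp
      next
        case jp: False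
        have "i \<in> S'" "j \<in> S'" using i j ip jp S'_def by auto
        then have "X' i j = (\<Sum>k\<in>S'. u' k i * cnj (u' k j))" using u'1 by blast
        then show ?thesis unfolding sumS X'_def using ip jp by (simp add: algebra_simps)
      qed
    qed
  qed
  have zer: "\<forall>k\<in>S-P. \<forall>i\<in>P. u k i = 0"
  proof (intro ballI)
    fix k i assume k: "k \<in> S - P" and i: "i \<in> P"
    then have "P \<noteq> {}" by auto
    then have "p \<in> P" using pP by blast
    then have kp: "k \<noteq> p" using k by auto
    show "u k i = 0"
    proof (cases "i = p")
      case True then show ?thesis using kp unfolding u_def by simp
    next
      case False
      then have "k \<in> S' - P'" "i \<in> P'" using k i kp S'_def P'_def by auto
      then show ?thesis using u'2 kp False unfolding u_def by simp
    qed
  qed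
  show ?case using dec zer by blast
qed

lemma contr_transpose:
  fixes G :: "'b \<Rightarrow> 'y \<Rightarrow> complex"
  assumes H: "\<And>z. (\<Sum>b\<in>B. (cmod (\<Sum>y\<in>Y. G b y * z y))^2) \<le> (\<Sum>y\<in>Y. (cmod (z y))^2)"
  shows "(\<Sum>y\<in>Y. (cmod (\<Sum>b\<in>B. G b y * v b))^2) \<le> (\<Sum>b\<in>B. (cmod (v b))^2)"
proof -
  define h where "h y = (\<Sum>b\<in>B. G b y * v b)" for y
  define c where "c b = (\<Sum>y\<in>Y. G b y * cnj (h y))" for b
  define N2 where "N2 = (\<Sum>y\<in>Y. (cmod (h y))^2)"
  define V where "V = (\<Sum>b\<in>B. (cmod (v b))^2)"
  have "of_real N2 = (\<Sum>y\<in>Y. h y * cnj (h y))"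
    unfolding N2_def of_real_sum by (simp only: complex_norm_square)
  also have "\<dots> = (\<Sum>y\<in>Y. \<Sum>b\<in>B. v b * (G b y * cnj (h y)))"
    unfolding h_def sum_distrib_right by (simp add: mult_ac)
  also have "\<dots> = (\<Sum>b\<in>B. \<Sum>y\<in>Y. v b * (G b y * cnj (h y)))"
    by (rule sum.swap)
  also have "\<dots> = (\<Sum>b\<in>B. v b * c b)"
    unfolding c_def sum_distrib_left by simp
  finally have e: "of_real N2 = (\<Sum>b\<in>B. v b * c b)" .
  have N2nn: "N2 \<ge> 0" unfolding N2_def by (simp add: sum_nonneg)
  have "N2 = cmod (\<Sum>b\<in>B. v b * c b)" using e N2nn
    by (simp add: e[symmetric])
  also have "\<dots> \<le> (\<Sum>b\<in>B. cmod (v b) * cmod (c b))"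
    by (rule order_trans[OF norm_sum]) (simp add: norm_mult)
  finally have 1: "N2 \<le> (\<Sum>b\<in>B. cmod (v b) * cmod (c b))" .
  have 2: "(\<Sum>b\<in>B. cmod (v b) * cmod (c b))^2 \<le> V * (\<Sum>b\<in>B. (cmod (c b))^2)"
    unfolding V_def by (rule Cauchy_Schwarz_ineq_sum)
  have 3: "(\<Sum>b\<in>B. (cmod (c b))^2) \<le> N2"
    using H[of "\<lambda>y. cnj (h y)"] unfolding c_def N2_def by simp
  have "N2^2 \<le> (\<Sum>b\<in>B. cmod (v b) * cmod (c b))^2"
    using 1 N2nn by (simp add: power_mono)
  also have "\<dots> \<le> V * N2"
  proof -
    have "V \<ge> 0" unfolding V_def by (simp add: sum_nonneg)
    then have "V * (\<Sum>b\<in>B. (cmod (c b))^2) \<le> V * N2" using 3 by (simp add: mult_left_mono)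
    then show ?thesis using 2 by linarith
  qed
  finally have "N2 * N2 \<le> V * N2" by (simp add: power2_eq_square)
  then have "N2 \<le> V"
  proof (cases "N2 = 0")
    case True then show ?thesis unfolding V_def by (simp add: sum_nonneg)
  next
    case False then have "N2 > 0" using N2nn by simp
    then show ?thesis using \<open>N2 * N2 \<le> V * N2\<close> by simp
  qed
  then show ?thesis unfolding N2_def V_def h_def .
qed

lemma qf_cong:
  assumes "\<And>i j. i \<in> S \<Longrightarrow> j \<in> S \<Longrightarrow> X i j = X' i j"
  shows "qf S X v = qf S X' v"
  unfolding qf_def using assms by (auto intro!: sum.cong)

lemma sum_plus_split:
  fixes f :: "'a + 'b \<Rightarrow> 'c::comm_monoid_add"
  assumes "finite A" "finite B"
  shows "(\<Sum>k\<in>Inl ` A \<union> Inr ` B. f k) = (\<Sum>a\<in>A. f (Inl a)) + (\<Sum>b\<in>B. f (Inr b))"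
proof -
  have "(\<Sum>k\<in>Inl ` A \<union> Inr ` B. f k) = (\<Sum>k\<in>Inl ` A. f k) + (\<Sum>k\<in>Inr ` B. f k)"
    by (rule sum.union_disjoint) (use assms in auto)
  also have "(\<Sum>k\<in>Inl ` A. f k) = (\<Sum>a\<in>A. f (Inl a))" by (simp add: sum.reindex)
  also have "(\<Sum>k\<in>Inr ` B. f k) = (\<Sum>b\<in>B. f (Inr b))" by (simp add: sum.reindex)
  finally show ?thesis .
qed

lemma factor:
  fixes \<omega> :: "('a::finite \<times> 'x) \<Rightarrow> ('a \<times> 'x) \<Rightarrow> complex"
  assumes finX: "finite Xs" and psd: "psd_on (UNIV \<times> Xs) \<omega>"
  shows "\<exists>L :: 'a qop. \<exists>G :: 'a \<Rightarrow> ('x \<times> ('a \<times> 'x)) \<Rightarrow> complex.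
     (\<forall>a b. \<forall>x\<in>Xs. \<forall>x'\<in>Xs. \<omega> (a,x) (b,x') =
        (\<Sum>k\<in>UNIV\<times>Xs. (\<Sum>a'\<in>UNIV. L a a' * G a' (x,k)) * cnj (\<Sum>b'\<in>UNIV. L b b' * G b' (x',k))))
   \<and> (\<forall>v. (\<Sum>y\<in>Xs \<times> (UNIV\<times>Xs). (cmod (\<Sum>a'\<in>UNIV. G a' y * v a'))^2) \<le> (\<Sum>a'\<in>UNIV. (cmod (v a'))^2))
   \<and> (\<Sum>a\<in>UNIV. \<Sum>a'\<in>UNIV. (cmod (L a a'))^2) = Re (\<Sum>a\<in>UNIV. \<Sum>x\<in>Xs. \<omega> (a,x) (a,x))"
proof -
  define SA where "SA = (UNIV :: 'a set) \<times> Xs"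
  have finSA: "finite SA" unfolding SA_def using finX by simp
  obtain w where w: "\<forall>i\<in>SA. \<forall>j\<in>SA. \<omega> i j = (\<Sum>k\<in>SA. w k i * cnj (w k j))"
    using chol[OF finSA _ psd[folded SA_def], of "{}"] by blast
  define Y where "Y = Xs \<times> SA"
  have finY: "finite Y" unfolding Y_def using finX finSA by simp
  define W where "W a y = w (snd y) (a, fst y)" for a y
  define F where "F i y = (case i of Inl a \<Rightarrow> W a y | Inr y' \<Rightarrow> (if y' = y then 1 else 0))"
    for i :: "'a + ('x \<times> ('a \<times> 'x))" and y
  define Z where "Z i j = (\<Sum>y\<in>Y. F i y * cnj (F j y))" for i j
  define SZ where "SZ = Inl ` (UNIV :: 'a set) \<union> Inr ` Y"
  have finSZ: "finite SZ" unfolding SZ_def using finY by simp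
  have psdZ: "psd_on SZ Z" unfolding Z_def by (rule gram_psd)
  obtain u where u1: "\<forall>i\<in>SZ. \<forall>j\<in>SZ. Z i j = (\<Sum>k\<in>SZ. u k i * cnj (u k j))"
    and u2: "\<forall>k\<in>SZ - Inl ` UNIV. \<forall>i\<in>Inl ` UNIV. u k i = 0"
    using chol[OF finSZ _ psdZ, of "Inl ` UNIV"] unfolding SZ_def by blast
  have u2': "u (Inr y) (Inl a) = 0" if "y \<in> Y" for y a
    using u2 that unfolding SZ_def by auto
  define L where "L a b = u (Inl b) (Inl a)" for a b
  define G where "G b y = cnj (u (Inl b) (Inr y))" for b y
  have sumSZ: "(\<Sum>k\<in>SZ. f k) = (\<Sum>b\<in>UNIV. f (Inl b)) + (\<Sum>y\<in>Y. f (Inr y))" for f :: "_ \<Rightarrow> complex"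
    unfolding SZ_def by (rule sum_plus_split) (use finY in auto)
  have ZInl: "Z (Inl a) j = (\<Sum>b\<in>UNIV. u (Inl b) (Inl a) * cnj (u (Inl b) j))" if "j \<in> SZ" for a j
  proof -
    have "Inl a \<in> SZ" unfolding SZ_def by simp
    then have "Z (Inl a) j = (\<Sum>k\<in>SZ. u k (Inl a) * cnj (u k j))" using u1 that by blast
    also have "\<dots> = (\<Sum>b\<in>UNIV. u (Inl b) (Inl a) * cnj (u (Inl b) j))"
      unfolding sumSZ using u2' by simp
    finally show ?thesis .
  qed
  have ZInr: "Z i (Inr y) = F i y" if "y \<in> Y" for i y
  proof -
    have "Z i (Inr y) = (\<Sum>y'\<in>Y. if y = y' then F i y' else 0)"
      unfolding Z_def F_def by (rule sum.cong) auto
    also have "\<dots> = F i y" using that finY by simp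
    finally show ?thesis .
  qed
  have WLG: "W a y = (\<Sum>b\<in>UNIV. L a b * G b y)" if "y \<in> Y" for a y
  proof -
    have "W a y = Z (Inl a) (Inr y)" using ZInr[OF that] unfolding F_def by simp
    also have "\<dots> = (\<Sum>b\<in>UNIV. L a b * G b y)"
      using ZInl[of "Inr y"] that unfolding SZ_def L_def G_def by simp
    finally show ?thesis .
  qed
  have part1: "\<forall>a b. \<forall>x\<in>Xs. \<forall>x'\<in>Xs. \<omega> (a,x) (b,x') =
        (\<Sum>k\<in>UNIV\<times>Xs. (\<Sum>a'\<in>UNIV. L a a' * G a' (x,k)) * cnj (\<Sum>b'\<in>UNIV. L b b' * G b' (x',k)))"
  proof (intro allI ballI)
    fix a b x x' assume x: "x \<in> Xs" and x': "x' \<in> Xs"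
    have "\<omega> (a,x) (b,x') = (\<Sum>k\<in>SA. w k (a,x) * cnj (w k (b,x')))"
      using w x x' unfolding SA_def by blast
    also have "\<dots> = (\<Sum>k\<in>SA. W a (x,k) * cnj (W b (x',k)))" unfolding W_def by simp
    also have "\<dots> = (\<Sum>k\<in>SA. (\<Sum>a'\<in>UNIV. L a a' * G a' (x,k)) * cnj (\<Sum>b'\<in>UNIV. L b b' * G b' (x',k)))"
      by (rule sum.cong[OF refl]) (use x x' in \<open>simp add: WLG Y_def\<close>)
    finally show "\<omega> (a,x) (b,x') =
        (\<Sum>k\<in>UNIV\<times>Xs. (\<Sum>a'\<in>UNIV. L a a' * G a' (x,k)) * cnj (\<Sum>b'\<in>UNIV. L b b' * G b' (x',k)))"
      unfolding SA_def .
  qed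
  have H: "(\<Sum>b\<in>UNIV. (cmod (\<Sum>y\<in>Y. G b y * z y))^2) \<le> (\<Sum>y\<in>Y. (cmod (z y))^2)" for z
  proof -
    have "qf Y (\<lambda>y y'. Z (Inr y) (Inr y')) z = qf Y (\<lambda>y y'. \<Sum>k\<in>SZ. u k (Inr y) * cnj (u k (Inr y'))) z"
      by (rule qf_cong) (use u1 in \<open>auto simp: SZ_def\<close>)
    also have "\<dots> = (\<Sum>k\<in>SZ. of_real ((cmod (\<Sum>y\<in>Y. cnj (z y) * u k (Inr y)))^2))"
      by (rule qf_gram)
    finally have e1: "qf Y (\<lambda>y y'. Z (Inr y) (Inr y')) z =
       (\<Sum>k\<in>SZ. of_real ((cmod (\<Sum>y\<in>Y. cnj (z y) * u k (Inr y)))^2))" .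
    have "qf Y (\<lambda>y y'. Z (Inr y) (Inr y')) z = qf Y (\<lambda>y y'. if y = y' then 1 else 0) z"
      by (rule qf_cong) (simp add: ZInr F_def)
    also have "\<dots> = (\<Sum>y\<in>Y. cnj (z y) * z y)"
      unfolding qf_def using finY by (simp add: if_distrib if_distribR cong: if_cong)
    also have "\<dots> = of_real (\<Sum>y\<in>Y. (cmod (z y))^2)"
      unfolding of_real_sum by (rule sum.cong[OF refl]) (subst complex_norm_square, simp add: mult.commute)
    finally have e2: "of_real (\<Sum>y\<in>Y. (cmod (z y))^2) =
       (\<Sum>k\<in>SZ. of_real ((cmod (\<Sum>y\<in>Y. cnj (z y) * u k (Inr y)))^2) :: complex)"
      using e1 by simp
    have e3: "(\<Sum>y\<in>Y. (cmod (z y))^2) = (\<Sum>k\<in>SZ. (cmod (\<Sum>y\<in>Y. cnj (z y) * u k (Inr y)))^2)"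
      using e2 unfolding of_real_sum[symmetric] of_real_eq_iff .
    have "(\<Sum>b\<in>UNIV. (cmod (\<Sum>y\<in>Y. G b y * z y))^2)
        = (\<Sum>b\<in>UNIV. (cmod (\<Sum>y\<in>Y. cnj (z y) * u (Inl b) (Inr y)))^2)"
    proof (rule sum.cong[OF refl])
      fix b
      have "(\<Sum>y\<in>Y. G b y * z y) = cnj (\<Sum>y\<in>Y. cnj (z y) * u (Inl b) (Inr y))"
        unfolding G_def cnj_sum by (simp add: mult.commute)
      then show "(cmod (\<Sum>y\<in>Y. G b y * z y))^2 = (cmod (\<Sum>y\<in>Y. cnj (z y) * u (Inl b) (Inr y)))^2"
        by (simp only: complex_mod_cnj)
    qed
    also have "\<dots> \<le> (\<Sum>k\<in>SZ. (cmod (\<Sum>y\<in>Y. cnj (z y) * u k (Inr y)))^2)"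
    proof -
      have "(\<Sum>k\<in>SZ. (cmod (\<Sum>y\<in>Y. cnj (z y) * u k (Inr y)))^2) =
          (\<Sum>b\<in>UNIV. (cmod (\<Sum>y\<in>Y. cnj (z y) * u (Inl b) (Inr y)))^2)
          + (\<Sum>y'\<in>Y. (cmod (\<Sum>y\<in>Y. cnj (z y) * u (Inr y') (Inr y)))^2)"
        unfolding SZ_def by (rule sum_plus_split) (use finY in auto)
      moreover have "(\<Sum>y'\<in>Y. (cmod (\<Sum>y\<in>Y. cnj (z y) * u (Inr y') (Inr y)))^2) \<ge> 0"
        by (simp add: sum_nonneg)
      ultimately show ?thesis by linarith
    qed
    finally show ?thesis using e3 by simp
  qed
  have part2: "\<forall>v. (\<Sum>y\<in>Xs \<times> (UNIV\<times>Xs). (cmod (\<Sum>a'\<in>UNIV. G a' y * v a'))^2) \<le> (\<Sum>a'\<in>UNIV. (cmod (v a'))^2)"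
    using contr_transpose[where G=G and B=UNIV and Y=Y, OF H] unfolding Y_def SA_def by blast
  have diagL: "(\<Sum>a'\<in>UNIV. (cmod (L a a'))^2) = (\<Sum>y\<in>Y. (cmod (W a y))^2)" for a
  proof -
    have "of_real (\<Sum>a'\<in>UNIV. (cmod (L a a'))^2) = (\<Sum>a'\<in>UNIV. L a a' * cnj (L a a'))"
      by (simp only: of_real_sum complex_norm_square)
    also have "\<dots> = Z (Inl a) (Inl a)"
      using ZInl[of "Inl a" a] unfolding SZ_def L_def by simp
    also have "\<dots> = (\<Sum>y\<in>Y. W a y * cnj (W a y))"
      unfolding Z_def F_def by simp
    also have "\<dots> = of_real (\<Sum>y\<in>Y. (cmod (W a y))^2)"
      by (simp only: of_real_sum complex_norm_square)
    finally show ?thesis by (simp only: of_real_eq_iff)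
  qed
  have "(\<Sum>a\<in>UNIV. \<Sum>a'\<in>UNIV. (cmod (L a a'))^2) = (\<Sum>a\<in>UNIV. \<Sum>x\<in>Xs. \<Sum>k\<in>SA. (cmod (w k (a,x)))^2)"
    unfolding diagL Y_def W_def by (simp add: sum.cartesian_product split_beta)
  also have "\<dots> = Re (\<Sum>a\<in>UNIV. \<Sum>x\<in>Xs. \<omega> (a,x) (a,x))"
  proof -
    have "\<omega> (a,x) (a,x) = of_real (\<Sum>k\<in>SA. (cmod (w k (a,x)))^2)" if "x \<in> Xs" for a x
    proof -
      have "\<omega> (a,x) (a,x) = (\<Sum>k\<in>SA. w k (a,x) * cnj (w k (a,x)))"
        using w that unfolding SA_def by blast
      then show ?thesis by (simp only: of_real_sum complex_norm_square)
    qed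
    then show ?thesis by (simp add: Re_sum)
  qed
  finally have part3: "(\<Sum>a\<in>UNIV. \<Sum>a'\<in>UNIV. (cmod (L a a'))^2) = Re (\<Sum>a\<in>UNIV. \<Sum>x\<in>Xs. \<omega> (a,x) (a,x))" .
  show ?thesis using part1 part2 part3 by blast
qed

lemma sum_times: "(\<Sum>i\<in>A \<times> B. f i) = (\<Sum>a\<in>A. \<Sum>b\<in>B. f (a,b))"
  by (simp add: sum.cartesian_product)

lemma sum_UNIV_pair: "(\<Sum>i\<in>(UNIV :: ('a \<times> 'b) set). f i) = (\<Sum>a\<in>UNIV. \<Sum>b\<in>UNIV. f (a,b))"
  by (simp add: sum.cartesian_product)

lemma qf_congr:
  fixes T :: "('b::finite \<times> 'x) qop" and G :: "'a::finite \<Rightarrow> ('x \<times> 'k) \<Rightarrow> complex"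
    and v :: "'b \<times> 'a \<Rightarrow> complex"
  shows "qf UNIV (\<lambda>(\<beta>,b') (\<beta>2,a'). \<Sum>k\<in>K. \<Sum>x\<in>X. \<Sum>x'\<in>X. cnj (G b' (x,k)) * T (\<beta>,x) (\<beta>2,x') * G a' (x',k)) v
   = (\<Sum>k\<in>K. qf (UNIV \<times> X) T (\<lambda>(\<beta>,x). \<Sum>a'\<in>UNIV. G a' (x,k) * v (\<beta>,a')))"
proof -
  have "qf UNIV (\<lambda>(\<beta>,b') (\<beta>2,a'). \<Sum>k\<in>K. \<Sum>x\<in>X. \<Sum>x'\<in>X. cnj (G b' (x,k)) * T (\<beta>,x) (\<beta>2,x') * G a' (x',k)) v
    = (\<Sum>\<beta>\<in>UNIV. \<Sum>b'\<in>UNIV. \<Sum>\<beta>2\<in>UNIV. \<Sum>a'\<in>UNIV. \<Sum>k\<in>K. \<Sum>x\<in>X. \<Sum>x'\<in>X.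
        cnj (v (\<beta>,b')) * cnj (G b' (x,k)) * T (\<beta>,x) (\<beta>2,x') * G a' (x',k) * v (\<beta>2,a'))"
    unfolding qf_def sum_UNIV_pair
    by (simp add: sum_distrib_left sum_distrib_right mult_ac)
  also have "\<dots> = (\<Sum>\<beta>\<in>UNIV. \<Sum>\<beta>2\<in>UNIV. \<Sum>b'\<in>UNIV. \<Sum>a'\<in>UNIV. \<Sum>k\<in>K. \<Sum>x\<in>X. \<Sum>x'\<in>X. cnj (v (\<beta>,b')) * cnj (G b' (x,k)) * T (\<beta>,x) (\<beta>2,x') * G a' (x',k) * v (\<beta>2,a'))"
    apply (rule sum.cong[OF refl]) by (rule sum.swap)
  also have "\<dots> = (\<Sum>\<beta>\<in>UNIV. \<Sum>\<beta>2\<in>UNIV. \<Sum>b'\<in>UNIV. \<Sum>k\<in>K. \<Sum>a'\<in>UNIV. \<Sum>x\<in>X. \<Sum>x'\<in>X. cnj (v (\<beta>,b')) * cnj (G b' (x,k)) * T (\<beta>,x) (\<beta>2,x') * G a' (x',k) * v (\<beta>2,a'))"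
    apply (rule sum.cong[OF refl]) apply (rule sum.cong[OF refl]) apply (rule sum.cong[OF refl]) by (rule sum.swap)
  also have "\<dots> = (\<Sum>\<beta>\<in>UNIV. \<Sum>\<beta>2\<in>UNIV. \<Sum>b'\<in>UNIV. \<Sum>k\<in>K. \<Sum>x\<in>X. \<Sum>a'\<in>UNIV. \<Sum>x'\<in>X. cnj (v (\<beta>,b')) * cnj (G b' (x,k)) * T (\<beta>,x) (\<beta>2,x') * G a' (x',k) * v (\<beta>2,a'))"
    apply (rule sum.cong[OF refl]) apply (rule sum.cong[OF refl]) apply (rule sum.cong[OF refl]) apply (rule sum.cong[OF refl]) by (rule sum.swap)
  also have "\<dots> = (\<Sum>\<beta>\<in>UNIV. \<Sum>\<beta>2\<in>UNIV. \<Sum>b'\<in>UNIV. \<Sum>k\<in>K. \<Sum>x\<in>X. \<Sum>x'\<in>X. \<Sum>a'\<in>UNIV. cnj (v (\<beta>,b')) * cnj (G b' (x,k)) * T (\<beta>,x) (\<beta>2,x') * G a' (x',k) * v (\<beta>2,a'))"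
    apply (rule sum.cong[OF refl]) apply (rule sum.cong[OF refl]) apply (rule sum.cong[OF refl]) apply (rule sum.cong[OF refl]) apply (rule sum.cong[OF refl]) by (rule sum.swap)
  also have "\<dots> = (\<Sum>\<beta>\<in>UNIV. \<Sum>\<beta>2\<in>UNIV. \<Sum>k\<in>K. \<Sum>b'\<in>UNIV. \<Sum>x\<in>X. \<Sum>x'\<in>X. \<Sum>a'\<in>UNIV. cnj (v (\<beta>,b')) * cnj (G b' (x,k)) * T (\<beta>,x) (\<beta>2,x') * G a' (x',k) * v (\<beta>2,a'))"
    apply (rule sum.cong[OF refl]) apply (rule sum.cong[OF refl]) by (rule sum.swap)
  also have "\<dots> = (\<Sum>\<beta>\<in>UNIV. \<Sum>\<beta>2\<in>UNIV. \<Sum>k\<in>K. \<Sum>x\<in>X. \<Sum>b'\<in>UNIV. \<Sum>x'\<in>X. \<Sum>a'\<in>UNIV. cnj (v (\<beta>,b')) * cnj (G b' (x,k)) * T (\<beta>,x) (\<beta>2,x') * G a' (x',k) * v (\<beta>2,a'))"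
    apply (rule sum.cong[OF refl]) apply (rule sum.cong[OF refl]) apply (rule sum.cong[OF refl]) by (rule sum.swap)
  also have "\<dots> = (\<Sum>\<beta>\<in>UNIV. \<Sum>\<beta>2\<in>UNIV. \<Sum>k\<in>K. \<Sum>x\<in>X. \<Sum>x'\<in>X. \<Sum>b'\<in>UNIV. \<Sum>a'\<in>UNIV. cnj (v (\<beta>,b')) * cnj (G b' (x,k)) * T (\<beta>,x) (\<beta>2,x') * G a' (x',k) * v (\<beta>2,a'))"
    apply (rule sum.cong[OF refl]) apply (rule sum.cong[OF refl]) apply (rule sum.cong[OF refl]) apply (rule sum.cong[OF refl]) by (rule sum.swap)
  also have "\<dots> = (\<Sum>\<beta>\<in>UNIV. \<Sum>k\<in>K. \<Sum>\<beta>2\<in>UNIV. \<Sum>x\<in>X. \<Sum>x'\<in>X. \<Sum>b'\<in>UNIV. \<Sum>a'\<in>UNIV. cnj (v (\<beta>,b')) * cnj (G b' (x,k)) * T (\<beta>,x) (\<beta>2,x') * G a' (x',k) * v (\<beta>2,a'))"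
    apply (rule sum.cong[OF refl]) by (rule sum.swap)
  also have "\<dots> = (\<Sum>\<beta>\<in>UNIV. \<Sum>k\<in>K. \<Sum>x\<in>X. \<Sum>\<beta>2\<in>UNIV. \<Sum>x'\<in>X. \<Sum>b'\<in>UNIV. \<Sum>a'\<in>UNIV. cnj (v (\<beta>,b')) * cnj (G b' (x,k)) * T (\<beta>,x) (\<beta>2,x') * G a' (x',k) * v (\<beta>2,a'))"
    apply (rule sum.cong[OF refl]) apply (rule sum.cong[OF refl]) by (rule sum.swap)
  also have "\<dots> = (\<Sum>k\<in>K. \<Sum>\<beta>\<in>UNIV. \<Sum>x\<in>X. \<Sum>\<beta>2\<in>UNIV. \<Sum>x'\<in>X. \<Sum>b'\<in>UNIV. \<Sum>a'\<in>UNIV. cnj (v (\<beta>,b')) * cnj (G b' (x,k)) * T (\<beta>,x) (\<beta>2,x') * G a' (x',k) * v (\<beta>2,a'))"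
    by (rule sum.swap)
  also have "\<dots> = (\<Sum>k\<in>K. qf (UNIV \<times> X) T (\<lambda>(\<beta>,x). \<Sum>a'\<in>UNIV. G a' (x,k) * v (\<beta>,a')))"
    unfolding qf_def sum_times
    by (simp add: sum_distrib_left sum_distrib_right cnj_sum mult_ac)
  finally show ?thesis .
qed

lemma qf_reindex:
  assumes "bij_betw \<phi> T S"
  shows "qf S X v = qf T (\<lambda>i j. X (\<phi> i) (\<phi> j)) (\<lambda>i. v (\<phi> i))"
  unfolding qf_def
  by (subst sum.reindex_bij_betw[OF assms, symmetric], rule sum.cong[OF refl],
      subst sum.reindex_bij_betw[OF assms, symmetric], rule refl)

lemma qlinear_zero: "qlinear N \<Longrightarrow> N (\<lambda>i j. 0) = (\<lambda>i j. 0)"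
proof -
  assume "qlinear N"
  then have "\<forall>c X. N (\<lambda>i j. c * X i j) = (\<lambda>i j. c * N X i j)"
    unfolding qlinear_def by (rule conjunct2)
  from this[rule_format, of 0 "\<lambda>i j. 0"] show ?thesis by simp
qed

lemma qlinear_sum:
  assumes "qlinear N" "finite F"
  shows "N (\<lambda>i j. \<Sum>k\<in>F. c k * X k i j) = (\<lambda>i j. \<Sum>k\<in>F. c k * N (X k) i j)"
  using assms(2)
proof (induction F)
  case empty then show ?case using qlinear_zero[OF assms(1)] by simp
next
  case (insert x F)
  have "N (\<lambda>i j. \<Sum>k\<in>insert x F. c k * X k i j) = N (\<lambda>i j. c x * X x i j + (\<Sum>k\<in>F. c k * X k i j))"
    using insert by simp
  also have "\<dots> = (\<lambda>i j. N (\<lambda>i j. c x * X x i j) i j + N (\<lambda>i j. \<Sum>k\<in>F. c k * X k i j) i j)"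
  proof -
    have "\<forall>X Y. N (\<lambda>i j. X i j + Y i j) = (\<lambda>i j. N X i j + N Y i j)"
      using assms(1) unfolding qlinear_def by blast
    then show ?thesis
      by (rule allE[of _ "\<lambda>i j. c x * X x i j"], rule allE[of _ "\<lambda>i j. \<Sum>k\<in>F. c k * X k i j"]) simp
  qed
  also have "\<dots> = (\<lambda>i j. \<Sum>k\<in>insert x F. c k * N (X k) i j)"
    using insert assms(1) unfolding qlinear_def by simp
  finally show ?case .
qed

lemma channel_trace_apply_first:
  fixes N :: "('a::finite) qop \<Rightarrow> ('b::finite) qop" and X :: "('a \<times> 'c::finite) qop"
  assumes "channel N"
  shows "qtrace (apply_first N X) = qtrace X"
proof -
  have "qtrace (apply_first N X) = (\<Sum>c\<in>UNIV. qtrace (N (\<lambda>a a'. X (a,c) (a',c))))"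
    unfolding qtrace_def apply_first_def sum_UNIV_pair by (simp, rule sum.swap)
  also have "\<dots> = (\<Sum>c\<in>UNIV. qtrace (\<lambda>a a'. X (a,c) (a',c)))"
    using assms unfolding channel_def by simp
  also have "\<dots> = qtrace X"
    unfolding qtrace_def sum_UNIV_pair by (rule sum.swap)
  finally show ?thesis .
qed

lemma cp_apply_first:
  fixes N :: "('a::finite) qop \<Rightarrow> ('b::finite) qop" and X :: "('a \<times> 'c::finite) qop"
  assumes cp: "completely_positive N" and psdX: "psd X"
  shows "psd (apply_first N X)"
proof -
  obtain h :: "'c \<Rightarrow> nat" where hb: "bij_betw h UNIV {0..<card (UNIV :: 'c set)}"
    using ex_bij_betw_finite_nat[of "UNIV :: 'c set"] by auto
  define n where "n = card (UNIV :: 'c set)"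
  have hb': "bij_betw h UNIV {..<n}" using hb unfolding n_def by (simp add: atLeast0LessThan)
  define g where "g = inv_into UNIV h"
  have gh: "g (h c) = c" for c unfolding g_def using hb' by (simp add: bij_betw_def)
  define X' where "X' = (\<lambda>(i,a) (j,a'). X (a, g i) (a', g j))"
  define \<phi> where "\<phi> = (\<lambda>(a::'a, c::'c). (h c, a))"
  have bphi: "bij_betw \<phi> UNIV ({..<n} \<times> UNIV)"
  proof -
    have "bij_betw (\<lambda>(c,a). (h c, a)) (UNIV \<times> UNIV) ({..<n} \<times> (UNIV :: 'a set))"
      using bij_betw_map_prod[OF hb' bij_betw_id[of "UNIV :: 'a set"]] by (simp add: map_prod_def id_def)
    moreover have "bij_betw (\<lambda>(a::'a, c::'c). (c, a)) UNIV (UNIV \<times> UNIV)"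
      by (rule bij_betwI[where g="\<lambda>(c,a). (a,c)"]) auto
    ultimately have "bij_betw ((\<lambda>(c,a). (h c, a)) \<circ> (\<lambda>(a::'a, c::'c). (c, a))) UNIV ({..<n} \<times> UNIV)"
      by (rule bij_betw_trans[rotated])
    then show ?thesis unfolding \<phi>_def by (simp add: comp_def case_prod_unfold)
  qed
  have psdX': "psd_on ({..<n} \<times> UNIV) X'"
    unfolding psd_on_qf
  proof
    fix v
    have "qf ({..<n} \<times> UNIV) X' v = qf UNIV (\<lambda>i j. X' (\<phi> i) (\<phi> j)) (\<lambda>i. v (\<phi> i))"
      by (rule qf_reindex[OF bphi])
    also have "(\<lambda>i j. X' (\<phi> i) (\<phi> j)) = X"
      unfolding X'_def \<phi>_def by (auto simp: gh split_beta)
    finally show "Im (qf ({..<n} \<times> UNIV) X' v) = 0 \<and> 0 \<le> Re (qf ({..<n} \<times> UNIV) X' v)"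
      using psdX unfolding psd_on_qf by simp
  qed
  define Out where "Out = (\<lambda>(i,b) (j,b'). N (\<lambda>a a'. X' (i,a) (j,a')) b b')"
  have psdO: "psd_on ({..<n} \<times> UNIV) Out"
    using cp psdX' unfolding completely_positive_def Out_def by blast
  define chh where "chh = (\<lambda>(b::'b, c::'c). (h c, b))"
  have bchi: "bij_betw chh UNIV ({..<n} \<times> UNIV)"
  proof -
    have "bij_betw (\<lambda>(c,a). (h c, a)) (UNIV \<times> UNIV) ({..<n} \<times> (UNIV :: 'b set))"
      using bij_betw_map_prod[OF hb' bij_betw_id[of "UNIV :: 'b set"]] by (simp add: map_prod_def id_def)
    moreover have "bij_betw (\<lambda>(a::'b, c::'c). (c, a)) UNIV (UNIV \<times> UNIV)"
      by (rule bij_betwI[where g="\<lambda>(c,a). (a,c)"]) auto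
    ultimately have "bij_betw ((\<lambda>(c,a). (h c, a)) \<circ> (\<lambda>(a::'b, c::'c). (c, a))) UNIV ({..<n} \<times> UNIV)"
      by (rule bij_betw_trans[rotated])
    then show ?thesis unfolding chh_def by (simp add: comp_def case_prod_unfold)
  qed
  show ?thesis unfolding psd_on_qf
  proof
    fix w :: "'b \<times> 'c \<Rightarrow> complex"
    define w' where "w' = (\<lambda>(i,b). w (b, g i))"
    have "qf ({..<n} \<times> UNIV) Out w' = qf UNIV (\<lambda>i j. Out (chh i) (chh j)) (\<lambda>i. w' (chh i))"
      by (rule qf_reindex[OF bchi])
    also have "(\<lambda>i j. Out (chh i) (chh j)) = apply_first N X"
      unfolding Out_def chh_def X'_def apply_first_def by (auto simp: gh case_prod_unfold)
    also have "(\<lambda>i. w' (chh i)) = w"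
      unfolding w'_def chh_def by (auto simp: gh split_beta)
    finally show "Im (qf UNIV (apply_first N X) w) = 0 \<and> 0 \<le> Re (qf UNIV (apply_first N X) w)"
      using psdO unfolding psd_on_qf by metis
  qed
qed

definition omega :: "nat \<Rightarrow> (nat \<Rightarrow> ('ea::finite) qop \<Rightarrow> ('a::finite) qop) \<Rightarrow> ('ea \<times> ('eb::finite) \<Rightarrow> complex)
   \<Rightarrow> ('a \<times> (nat \<times> 'eb)) qop" where
  "omega K Enc \<theta> = (\<lambda>(a,(m,e)) (a2,(m2,e2)).
     if m = m2 then apply_first (Enc m) (ketbra \<theta>) (a,e) (a2,e2) / of_nat K else 0)"

lemma ketbra_psd: "psd (ketbra v)"
proof -
  have "ketbra v = (\<lambda>i j. \<Sum>k\<in>(UNIV :: unit set). v i * cnj (v j))" unfolding ketbra_def by simp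
  then show ?thesis using gram_psd[where S=UNIV and f="\<lambda>k::unit. v" and K=UNIV] by simp
qed

lemma omega_qf:
  fixes Enc :: "nat \<Rightarrow> ('ea::finite) qop \<Rightarrow> ('a::finite) qop" and \<theta> :: "'ea \<times> ('eb::finite) \<Rightarrow> complex"
  shows "qf (UNIV \<times> ({1..K} \<times> UNIV)) (omega K Enc \<theta>) v =
    (\<Sum>m\<in>{1..K}. qf UNIV (apply_first (Enc m) (ketbra \<theta>)) (\<lambda>(a,e). v (a,(m,e))) / of_nat K)"
proof -
  define \<rho> where "\<rho> m = apply_first (Enc m) (ketbra \<theta>)" for m
  have "qf (UNIV \<times> ({1..K} \<times> UNIV)) (omega K Enc \<theta>) v =
    (\<Sum>a\<in>UNIV. \<Sum>m\<in>{1..K}. \<Sum>e\<in>UNIV. \<Sum>a2\<in>UNIV. \<Sum>m2\<in>{1..K}. \<Sum>e2\<in>UNIV.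
       cnj (v (a,(m,e))) * (if m = m2 then \<rho> m (a,e) (a2,e2) / of_nat K else 0) * v (a2,(m2,e2)))"
    unfolding qf_def sum_times omega_def \<rho>_def by simp
  also have "\<dots> = (\<Sum>m\<in>{1..K}. \<Sum>a\<in>UNIV. \<Sum>e\<in>UNIV. \<Sum>a2\<in>UNIV. \<Sum>m2\<in>{1..K}. \<Sum>e2\<in>UNIV. cnj (v (a,(m,e))) * (if m = m2 then \<rho> m (a,e) (a2,e2) / of_nat K else 0) * v (a2,(m2,e2)))"
    by (rule sum.swap)
  also have "\<dots> = (\<Sum>m\<in>{1..K}. \<Sum>a\<in>UNIV. \<Sum>e\<in>UNIV. \<Sum>a2\<in>UNIV. \<Sum>e2\<in>UNIV. \<Sum>m2\<in>{1..K}. cnj (v (a,(m,e))) * (if m = m2 then \<rho> m (a,e) (a2,e2) / of_nat K else 0) * v (a2,(m2,e2)))"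
    apply (rule sum.cong[OF refl]) apply (rule sum.cong[OF refl]) apply (rule sum.cong[OF refl]) apply (rule sum.cong[OF refl]) by (rule sum.swap)
  also have "\<dots> = (\<Sum>m\<in>{1..K}. \<Sum>a\<in>UNIV. \<Sum>e\<in>UNIV. \<Sum>a2\<in>UNIV. \<Sum>e2\<in>UNIV.
       cnj (v (a,(m,e))) * (\<rho> m (a,e) (a2,e2) / of_nat K) * v (a2,(m,e2)))"
    by (intro sum.cong refl) (simp add: if_distrib if_distribR cong: if_cong)
  also have "\<dots> = (\<Sum>m\<in>{1..K}. qf UNIV (\<rho> m) (\<lambda>(a,e). v (a,(m,e))) / of_nat K)"
    unfolding qf_def sum_UNIV_pair by (simp add: sum_divide_distrib)
  finally show ?thesis unfolding \<rho>_def .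
qed

lemma omega_psd:
  fixes Enc :: "nat \<Rightarrow> ('ea::finite) qop \<Rightarrow> ('a::finite) qop" and \<theta> :: "'ea \<times> ('eb::finite) \<Rightarrow> complex"
  assumes "\<forall>m\<in>{1..K}. channel (Enc m)"
  shows "psd_on (UNIV \<times> ({1..K} \<times> UNIV)) (omega K Enc \<theta>)"
  unfolding psd_on_qf omega_qf
proof
  fix v :: "'a \<times> nat \<times> 'eb \<Rightarrow> complex"
  have p: "Im (qf UNIV (apply_first (Enc m) (ketbra \<theta>)) w) = 0 \<and> Re (qf UNIV (apply_first (Enc m) (ketbra \<theta>)) w) \<ge> 0"
    if "m \<in> {1..K}" for m w
    using cp_apply_first[of "Enc m" "ketbra \<theta>"] assms that ketbra_psd
    unfolding channel_def psd_on_qf by blast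
  show "Im (\<Sum>m\<in>{1..K}. qf UNIV (apply_first (Enc m) (ketbra \<theta>)) (\<lambda>(a, e). v (a, m, e)) / of_nat K) = 0 \<and>
    0 \<le> Re (\<Sum>m\<in>{1..K}. qf UNIV (apply_first (Enc m) (ketbra \<theta>)) (\<lambda>(a, e). v (a, m, e)) / of_nat K)"
    using p by (auto simp: Re_sum Im_sum intro!: sum_nonneg sum.neutral)
qed

definition Tdec :: "(nat \<Rightarrow> (('b::finite) \<times> ('eb::finite)) qop) \<Rightarrow> ('b \<times> (nat \<times> 'eb)) qop" where
  "Tdec Dec = (\<lambda>(\<beta>,(m,e)) (\<beta>2,(m2,e2)). if m = m2 then Dec m (\<beta>,e) (\<beta>2,e2) else 0)"

lemma Tdec_qf:
  fixes Dec :: "nat \<Rightarrow> (('b::finite) \<times> ('eb::finite)) qop"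
  shows "qf (UNIV \<times> ({1..K} \<times> UNIV)) (Tdec Dec) h =
    (\<Sum>m\<in>{1..K}. qf UNIV (Dec m) (\<lambda>(\<beta>,e). h (\<beta>,(m,e))))"
proof -
  have "qf (UNIV \<times> ({1..K} \<times> UNIV)) (Tdec Dec) h =
    (\<Sum>a\<in>UNIV. \<Sum>m\<in>{1..K}. \<Sum>e\<in>UNIV. \<Sum>a2\<in>UNIV. \<Sum>m2\<in>{1..K}. \<Sum>e2\<in>UNIV.
       cnj (h (a,(m,e))) * (if m = m2 then Dec m (a,e) (a2,e2) else 0) * h (a2,(m2,e2)))"
    unfolding qf_def sum_times Tdec_def by simp
  also have "\<dots> = (\<Sum>m\<in>{1..K}. \<Sum>a\<in>UNIV. \<Sum>e\<in>UNIV. \<Sum>a2\<in>UNIV. \<Sum>m2\<in>{1..K}. \<Sum>e2\<in>UNIV. cnj (h (a,(m,e))) * (if m = m2 then Dec m (a,e) (a2,e2) else 0) * h (a2,(m2,e2)))"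
    by (rule sum.swap)
  also have "\<dots> = (\<Sum>m\<in>{1..K}. \<Sum>a\<in>UNIV. \<Sum>e\<in>UNIV. \<Sum>a2\<in>UNIV. \<Sum>e2\<in>UNIV. \<Sum>m2\<in>{1..K}. cnj (h (a,(m,e))) * (if m = m2 then Dec m (a,e) (a2,e2) else 0) * h (a2,(m2,e2)))"
    apply (rule sum.cong[OF refl]) apply (rule sum.cong[OF refl]) apply (rule sum.cong[OF refl]) apply (rule sum.cong[OF refl]) by (rule sum.swap)
  also have "\<dots> = (\<Sum>m\<in>{1..K}. \<Sum>a\<in>UNIV. \<Sum>e\<in>UNIV. \<Sum>a2\<in>UNIV. \<Sum>e2\<in>UNIV.
       cnj (h (a,(m,e))) * Dec m (a,e) (a2,e2) * h (a2,(m,e2)))"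
    by (intro sum.cong refl) (simp add: if_distrib if_distribR cong: if_cong)
  also have "\<dots> = (\<Sum>m\<in>{1..K}. qf UNIV (Dec m) (\<lambda>(\<beta>,e). h (\<beta>,(m,e))))"
    unfolding qf_def sum_UNIV_pair by simp
  finally show ?thesis .
qed

lemma qf_sum_mat:
  assumes "finite F"
  shows "qf S (\<lambda>i j. \<Sum>m\<in>F. D m i j) g = (\<Sum>m\<in>F. qf S (D m) g)"
  unfolding qf_def by (simp add: sum_distrib_left sum_distrib_right sum.swap[of _ F])

lemma qf_qid: "qf UNIV (qid :: ('a::finite) qop) g = of_real (\<Sum>i\<in>UNIV. (cmod (g i))^2)"
proof -
  have "qf UNIV (qid :: ('a::finite) qop) g = (\<Sum>i\<in>UNIV. cnj (g i) * g i)"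
    unfolding qf_def qid_def by (simp add: if_distrib if_distribR cong: if_cong)
  also have "\<dots> = of_real (\<Sum>i\<in>UNIV. (cmod (g i))^2)"
    unfolding of_real_sum by (rule sum.cong[OF refl]) (subst complex_norm_square, simp add: mult.commute)
  finally show ?thesis .
qed

lemma Tdec_psd:
  fixes Dec :: "nat \<Rightarrow> (('b::finite) \<times> ('eb::finite)) qop"
  assumes "povm K Dec"
  shows "psd_on (UNIV \<times> ({1..K} \<times> UNIV)) (Tdec Dec)"
  unfolding psd_on_qf Tdec_qf
proof
  fix h :: "'b \<times> nat \<times> 'eb \<Rightarrow> complex"
  have p: "Im (qf UNIV (Dec m) w) = 0 \<and> Re (qf UNIV (Dec m) w) \<ge> 0" if "m \<in> {1..K}" for m w
    using assms that unfolding povm_def psd_on_qf by blast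
  show "Im (\<Sum>m\<in>{1..K}. qf UNIV (Dec m) (\<lambda>(\<beta>, e). h (\<beta>, m, e))) = 0 \<and>
    0 \<le> Re (\<Sum>m\<in>{1..K}. qf UNIV (Dec m) (\<lambda>(\<beta>, e). h (\<beta>, m, e)))"
    using p by (auto simp: Re_sum Im_sum intro!: sum_nonneg sum.neutral)
qed

lemma Tdec_le:
  fixes Dec :: "nat \<Rightarrow> (('b::finite) \<times> ('eb::finite)) qop"
  assumes pv: "povm K Dec"
  shows "Re (qf (UNIV \<times> ({1..K} \<times> UNIV)) (Tdec Dec) h) \<le> (\<Sum>i\<in>UNIV \<times> ({1..K} \<times> UNIV). (cmod (h i))^2)"
proof -
  have p: "Im (qf UNIV (Dec m) w) = 0 \<and> Re (qf UNIV (Dec m) w) \<ge> 0" if "m \<in> {1..K}" for m w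
    using pv that unfolding povm_def psd_on_qf by blast
  have one: "Re (qf UNIV (Dec m) w) \<le> (\<Sum>i\<in>UNIV. (cmod (w i))^2)" if m: "m \<in> {1..K}" for m w
  proof -
    have "Re (qf UNIV (Dec m) w) \<le> (\<Sum>m'\<in>{1..K}. Re (qf UNIV (Dec m') w))"
      by (rule member_le_sum) (use p m in auto)
    also have "\<dots> = Re (qf UNIV (\<lambda>i j. \<Sum>m'\<in>{1..K}. Dec m' i j) w)"
      by (simp add: qf_sum_mat Re_sum)
    also have "(\<lambda>i j. \<Sum>m'\<in>{1..K}. Dec m' i j) = qid"
      using pv unfolding povm_def by simp
    finally show ?thesis by (simp add: qf_qid)
  qed
  have "Re (qf (UNIV \<times> ({1..K} \<times> UNIV)) (Tdec Dec) h) =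
      (\<Sum>m\<in>{1..K}. Re (qf UNIV (Dec m) (\<lambda>(\<beta>,e). h (\<beta>,(m,e)))))"
    unfolding Tdec_qf by (simp add: Re_sum)
  also have "\<dots> \<le> (\<Sum>m\<in>{1..K}. \<Sum>i\<in>UNIV. (cmod ((\<lambda>(\<beta>,e). h (\<beta>,(m,e))) i))^2)"
    by (rule sum_mono) (rule one)
  also have "\<dots> = (\<Sum>m\<in>{1..K}. \<Sum>\<beta>\<in>UNIV. \<Sum>e\<in>UNIV. (cmod (h (\<beta>,(m,e))))^2)"
    unfolding sum_UNIV_pair by simp
  also have "\<dots> = (\<Sum>\<beta>\<in>UNIV. \<Sum>m\<in>{1..K}. \<Sum>e\<in>UNIV. (cmod (h (\<beta>,(m,e))))^2)"
    by (rule sum.swap)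
  also have "\<dots> = (\<Sum>i\<in>UNIV \<times> ({1..K} \<times> UNIV). (cmod (h i))^2)"
    unfolding sum_times by simp
  finally show ?thesis .
qed

definition Mtest :: "('a \<Rightarrow> ('x \<times> 'k) \<Rightarrow> complex) \<Rightarrow> ('b \<times> 'x) qop \<Rightarrow> 'x set \<Rightarrow> 'k set \<Rightarrow> ('b \<times> 'a) qop" where
  "Mtest G T X K = (\<lambda>(\<beta>,b') (\<beta>2,a'). \<Sum>k\<in>K. \<Sum>x\<in>X. \<Sum>x'\<in>X. cnj (G b' (x,k)) * T (\<beta>,x) (\<beta>2,x') * G a' (x',k))"

lemma M_psd:
  fixes T :: "('b::finite \<times> 'x) qop" and G :: "'a::finite \<Rightarrow> ('x \<times> 'k) \<Rightarrow> complex"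
  assumes psdT: "psd_on (UNIV \<times> X) T"
  shows "psd (Mtest G T X K)"
  unfolding psd_on_qf Mtest_def qf_congr
proof
  fix v :: "'b \<times> 'a \<Rightarrow> complex"
  show "Im (\<Sum>k\<in>K. qf (UNIV \<times> X) T (\<lambda>(\<beta>, x). \<Sum>a'\<in>UNIV. G a' (x, k) * v (\<beta>, a'))) = 0 \<and>
    0 \<le> Re (\<Sum>k\<in>K. qf (UNIV \<times> X) T (\<lambda>(\<beta>, x). \<Sum>a'\<in>UNIV. G a' (x, k) * v (\<beta>, a')))"
    using psdT unfolding psd_on_qf by (auto simp: Re_sum Im_sum intro!: sum_nonneg sum.neutral)
qed

lemma qf_diff: "qf S (\<lambda>i j. X i j - Y i j) v = qf S X v - qf S Y v"
  unfolding qf_def by (simp add: sum_subtractf algebra_simps)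

lemma M_le:
  fixes T :: "('b::finite \<times> 'x) qop" and G :: "'a::finite \<Rightarrow> ('x \<times> 'k) \<Rightarrow> complex"
  assumes psdT: "psd_on (UNIV \<times> X) T"
    and Tle: "\<And>h. Re (qf (UNIV \<times> X) T h) \<le> (\<Sum>i\<in>UNIV \<times> X. (cmod (h i))^2)"
    and Gc: "\<And>v. (\<Sum>y\<in>X \<times> K. (cmod (\<Sum>a'\<in>UNIV. G a' y * v a'))^2) \<le> (\<Sum>a'\<in>UNIV. (cmod (v a'))^2)"
  shows "psd (\<lambda>i j. qid i j - Mtest G T X K i j)"
  unfolding psd_on_qf qf_diff qf_qid
proof
  fix v :: "'b \<times> 'a \<Rightarrow> complex"
  define h where "h k = (\<lambda>(\<beta>, x). \<Sum>a'\<in>UNIV. G a' (x, k) * v (\<beta>, a'))" for k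
  have e: "qf UNIV (Mtest G T X K) v = (\<Sum>k\<in>K. qf (UNIV \<times> X) T (h k))"
    unfolding Mtest_def qf_congr h_def ..
  have im: "Im (qf UNIV (Mtest G T X K) v) = 0"
    unfolding e using psdT unfolding psd_on_qf by (auto simp: Im_sum intro!: sum.neutral)
  have "Re (qf UNIV (Mtest G T X K) v) \<le> (\<Sum>k\<in>K. \<Sum>i\<in>UNIV \<times> X. (cmod (h k i))^2)"
    unfolding e Re_sum by (rule sum_mono) (rule Tle)
  also have "\<dots> = (\<Sum>k\<in>K. \<Sum>\<beta>\<in>UNIV. \<Sum>x\<in>X. (cmod (\<Sum>a'\<in>UNIV. G a' (x, k) * v (\<beta>, a')))^2)"
    unfolding sum_times h_def by simp
  also have "\<dots> = (\<Sum>\<beta>\<in>UNIV. \<Sum>k\<in>K. \<Sum>x\<in>X. (cmod (\<Sum>a'\<in>UNIV. G a' (x, k) * v (\<beta>, a')))^2)"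
    by (rule sum.swap)
  also have "\<dots> = (\<Sum>\<beta>\<in>UNIV. \<Sum>x\<in>X. \<Sum>k\<in>K. (cmod (\<Sum>a'\<in>UNIV. G a' (x, k) * v (\<beta>, a')))^2)"
    by (rule sum.cong[OF refl], rule sum.swap)
  also have "\<dots> = (\<Sum>\<beta>\<in>UNIV. \<Sum>y\<in>X \<times> K. (cmod (\<Sum>a'\<in>UNIV. G a' y * v (\<beta>, a')))^2)"
    unfolding sum_times by simp
  also have "\<dots> \<le> (\<Sum>\<beta>\<in>UNIV. \<Sum>a'\<in>UNIV. (cmod (v (\<beta>, a')))^2)"
    by (rule sum_mono) (rule Gc)
  also have "\<dots> = (\<Sum>i\<in>UNIV. (cmod (v i))^2)"
    unfolding sum_UNIV_pair ..
  finally have re: "Re (qf UNIV (Mtest G T X K) v) \<le> (\<Sum>i\<in>UNIV. (cmod (v i))^2)" .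
  show "Im (complex_of_real (\<Sum>i\<in>UNIV. (cmod (v i))\<^sup>2) - qf UNIV (Mtest G T X K) v) = 0 \<and>
    0 \<le> Re (complex_of_real (\<Sum>i\<in>UNIV. (cmod (v i))\<^sup>2) - qf UNIV (Mtest G T X K) v)"
    using im re by simp
qed

lemma trace_M_channel:
  fixes N :: "('a::finite) qop \<Rightarrow> ('b::finite) qop" and T :: "('b \<times> 'x) qop"
    and G :: "'a \<Rightarrow> ('x \<times> 'k) \<Rightarrow> complex" and L :: "'a qop"
  assumes lin: "qlinear N" and finK: "finite K"
  shows "qtrace (qmult (Mtest G T X K) (apply_first N (ketbra (\<lambda>(a,a'). L a a')))) =
    (\<Sum>\<beta>\<in>UNIV. \<Sum>\<beta>2\<in>UNIV. \<Sum>x\<in>X. \<Sum>x'\<in>X. T (\<beta>,x) (\<beta>2,x') *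
       N (\<lambda>a a2. \<Sum>k\<in>K. (\<Sum>a'\<in>UNIV. L a a' * G a' (x',k)) * cnj (\<Sum>b'\<in>UNIV. L a2 b' * G b' (x,k))) \<beta>2 \<beta>)"
proof -
  define E where "E a' b' = (\<lambda>a a2. L a a' * cnj (L a2 b'))" for a' b'
  have rho: "apply_first N (ketbra (\<lambda>(a,a'). L a a')) (\<beta>2,a') (\<beta>,b') = N (E a' b') \<beta>2 \<beta>" for \<beta>2 a' \<beta> b'
    unfolding apply_first_def ketbra_def E_def by simp
  have "qtrace (qmult (Mtest G T X K) (apply_first N (ketbra (\<lambda>(a,a'). L a a')))) =
    (\<Sum>\<beta>\<in>UNIV. \<Sum>b'\<in>UNIV. \<Sum>\<beta>2\<in>UNIV. \<Sum>a'\<in>UNIV. \<Sum>k\<in>K. \<Sum>x\<in>X. \<Sum>x'\<in>X.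
       cnj (G b' (x,k)) * T (\<beta>,x) (\<beta>2,x') * G a' (x',k) * N (E a' b') \<beta>2 \<beta>)"
    unfolding qtrace_def qmult_def sum_UNIV_pair rho
    by (simp add: Mtest_def sum_distrib_right)
  also have "\<dots> = (\<Sum>\<beta>\<in>UNIV. \<Sum>\<beta>2\<in>UNIV. \<Sum>b'\<in>UNIV. \<Sum>a'\<in>UNIV. \<Sum>k\<in>K. \<Sum>x\<in>X. \<Sum>x'\<in>X. cnj (G b' (x,k)) * T (\<beta>,x) (\<beta>2,x') * G a' (x',k) * N (E a' b') \<beta>2 \<beta>)"
    apply (rule sum.cong[OF refl]) by (rule sum.swap)
  also have "\<dots> = (\<Sum>\<beta>\<in>UNIV. \<Sum>\<beta>2\<in>UNIV. \<Sum>a'\<in>UNIV. \<Sum>b'\<in>UNIV. \<Sum>k\<in>K. \<Sum>x\<in>X. \<Sum>x'\<in>X. cnj (G b' (x,k)) * T (\<beta>,x) (\<beta>2,x') * G a' (x',k) * N (E a' b') \<beta>2 \<beta>)"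
    apply (rule sum.cong[OF refl]) apply (rule sum.cong[OF refl]) by (rule sum.swap)
  also have "\<dots> = (\<Sum>\<beta>\<in>UNIV. \<Sum>\<beta>2\<in>UNIV. \<Sum>a'\<in>UNIV. \<Sum>k\<in>K. \<Sum>b'\<in>UNIV. \<Sum>x\<in>X. \<Sum>x'\<in>X. cnj (G b' (x,k)) * T (\<beta>,x) (\<beta>2,x') * G a' (x',k) * N (E a' b') \<beta>2 \<beta>)"
    apply (rule sum.cong[OF refl]) apply (rule sum.cong[OF refl]) apply (rule sum.cong[OF refl]) by (rule sum.swap)
  also have "\<dots> = (\<Sum>\<beta>\<in>UNIV. \<Sum>\<beta>2\<in>UNIV. \<Sum>a'\<in>UNIV. \<Sum>k\<in>K. \<Sum>x\<in>X. \<Sum>b'\<in>UNIV. \<Sum>x'\<in>X. cnj (G b' (x,k)) * T (\<beta>,x) (\<beta>2,x') * G a' (x',k) * N (E a' b') \<beta>2 \<beta>)"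
    apply (rule sum.cong[OF refl]) apply (rule sum.cong[OF refl]) apply (rule sum.cong[OF refl]) apply (rule sum.cong[OF refl]) by (rule sum.swap)
  also have "\<dots> = (\<Sum>\<beta>\<in>UNIV. \<Sum>\<beta>2\<in>UNIV. \<Sum>a'\<in>UNIV. \<Sum>k\<in>K. \<Sum>x\<in>X. \<Sum>x'\<in>X. \<Sum>b'\<in>UNIV. cnj (G b' (x,k)) * T (\<beta>,x) (\<beta>2,x') * G a' (x',k) * N (E a' b') \<beta>2 \<beta>)"
    apply (rule sum.cong[OF refl]) apply (rule sum.cong[OF refl]) apply (rule sum.cong[OF refl]) apply (rule sum.cong[OF refl]) apply (rule sum.cong[OF refl]) by (rule sum.swap)
  also have "\<dots> = (\<Sum>\<beta>\<in>UNIV. \<Sum>\<beta>2\<in>UNIV. \<Sum>k\<in>K. \<Sum>a'\<in>UNIV. \<Sum>x\<in>X. \<Sum>x'\<in>X. \<Sum>b'\<in>UNIV. cnj (G b' (x,k)) * T (\<beta>,x) (\<beta>2,x') * G a' (x',k) * N (E a' b') \<beta>2 \<beta>)"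
    apply (rule sum.cong[OF refl]) apply (rule sum.cong[OF refl]) by (rule sum.swap)
  also have "\<dots> = (\<Sum>\<beta>\<in>UNIV. \<Sum>\<beta>2\<in>UNIV. \<Sum>k\<in>K. \<Sum>x\<in>X. \<Sum>a'\<in>UNIV. \<Sum>x'\<in>X. \<Sum>b'\<in>UNIV. cnj (G b' (x,k)) * T (\<beta>,x) (\<beta>2,x') * G a' (x',k) * N (E a' b') \<beta>2 \<beta>)"
    apply (rule sum.cong[OF refl]) apply (rule sum.cong[OF refl]) apply (rule sum.cong[OF refl]) by (rule sum.swap)
  also have "\<dots> = (\<Sum>\<beta>\<in>UNIV. \<Sum>\<beta>2\<in>UNIV. \<Sum>k\<in>K. \<Sum>x\<in>X. \<Sum>x'\<in>X. \<Sum>a'\<in>UNIV. \<Sum>b'\<in>UNIV. cnj (G b' (x,k)) * T (\<beta>,x) (\<beta>2,x') * G a' (x',k) * N (E a' b') \<beta>2 \<beta>)"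
    apply (rule sum.cong[OF refl]) apply (rule sum.cong[OF refl]) apply (rule sum.cong[OF refl]) apply (rule sum.cong[OF refl]) by (rule sum.swap)
  also have "\<dots> = (\<Sum>\<beta>\<in>UNIV. \<Sum>\<beta>2\<in>UNIV. \<Sum>x\<in>X. \<Sum>k\<in>K. \<Sum>x'\<in>X. \<Sum>a'\<in>UNIV. \<Sum>b'\<in>UNIV. cnj (G b' (x,k)) * T (\<beta>,x) (\<beta>2,x') * G a' (x',k) * N (E a' b') \<beta>2 \<beta>)"
    apply (rule sum.cong[OF refl]) apply (rule sum.cong[OF refl]) by (rule sum.swap)
  also have "\<dots> = (\<Sum>\<beta>\<in>UNIV. \<Sum>\<beta>2\<in>UNIV. \<Sum>x\<in>X. \<Sum>x'\<in>X. \<Sum>k\<in>K. \<Sum>a'\<in>UNIV. \<Sum>b'\<in>UNIV. cnj (G b' (x,k)) * T (\<beta>,x) (\<beta>2,x') * G a' (x',k) * N (E a' b') \<beta>2 \<beta>)"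
    apply (rule sum.cong[OF refl]) apply (rule sum.cong[OF refl]) apply (rule sum.cong[OF refl]) by (rule sum.swap)
  also have "\<dots> = (\<Sum>\<beta>\<in>UNIV. \<Sum>\<beta>2\<in>UNIV. \<Sum>x\<in>X. \<Sum>x'\<in>X. T (\<beta>,x) (\<beta>2,x') *
       (\<Sum>k\<in>K. \<Sum>a'\<in>UNIV. \<Sum>b'\<in>UNIV. (G a' (x',k) * cnj (G b' (x,k))) * N (E a' b') \<beta>2 \<beta>))"
    by (simp add: sum_distrib_left mult_ac)
  also have "\<dots> = (\<Sum>\<beta>\<in>UNIV. \<Sum>\<beta>2\<in>UNIV. \<Sum>x\<in>X. \<Sum>x'\<in>X. T (\<beta>,x) (\<beta>2,x') *
       N (\<lambda>a a2. \<Sum>k\<in>K. (\<Sum>a'\<in>UNIV. L a a' * G a' (x',k)) * cnj (\<Sum>b'\<in>UNIV. L a2 b' * G b' (x,k))) \<beta>2 \<beta>)"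
  proof (intro sum.cong refl arg_cong2[where f="(*)"])
    fix \<beta> \<beta>2 x x'
    define c where "c = (\<lambda>(k,a',b'). G a' (x',k) * cnj (G b' (x,k)))"
    define Y where "Y = (\<lambda>(k::'k,a',b'). E a' b')"
    have A: "N (\<lambda>i j. \<Sum>t\<in>K \<times> (UNIV \<times> UNIV). c t * Y t i j) =
          (\<lambda>i j. \<Sum>t\<in>K \<times> (UNIV \<times> UNIV). c t * N (Y t) i j)"
      by (rule qlinear_sum[OF lin]) (use finK in simp)
    have B: "(\<lambda>i j. \<Sum>t\<in>K \<times> (UNIV \<times> UNIV). c t * Y t i j) =
       (\<lambda>a a2. \<Sum>k\<in>K. (\<Sum>a'\<in>UNIV. L a a' * G a' (x',k)) * cnj (\<Sum>b'\<in>UNIV. L a2 b' * G b' (x,k)))"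
      unfolding sum_times c_def Y_def E_def
      by (simp add: sum_product cnj_sum mult_ac)
    have C: "N (\<lambda>a a2. \<Sum>k\<in>K. (\<Sum>a'\<in>UNIV. L a a' * G a' (x',k)) * cnj (\<Sum>b'\<in>UNIV. L a2 b' * G b' (x,k))) \<beta>2 \<beta>
       = (\<Sum>t\<in>K \<times> (UNIV \<times> UNIV). c t * N (Y t) \<beta>2 \<beta>)"
      using A unfolding B by simp
    show "(\<Sum>k\<in>K. \<Sum>a'\<in>UNIV. \<Sum>b'\<in>UNIV. (G a' (x',k) * cnj (G b' (x,k))) * N (E a' b') \<beta>2 \<beta>) =
       N (\<lambda>a a2. \<Sum>k\<in>K. (\<Sum>a'\<in>UNIV. L a a' * G a' (x',k)) * cnj (\<Sum>b'\<in>UNIV. L a2 b' * G b' (x,k))) \<beta>2 \<beta>"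
      unfolding C unfolding sum_times c_def Y_def by simp
  qed
  finally show ?thesis .
qed

lemma trace_M_tensor:
  fixes T :: "('b::finite \<times> 'x) qop" and \<sigma> :: "'b qop"
    and G :: "'a::finite \<Rightarrow> ('x \<times> 'k) \<Rightarrow> complex" and L :: "'a qop" and P :: "'a qop"
  assumes P: "\<And>a' b'. P a' b' = (\<Sum>a\<in>UNIV. L a a' * cnj (L a b'))"
  shows "qtrace (qmult (Mtest G T X K) (qtensor \<sigma> P)) =
    (\<Sum>\<beta>\<in>UNIV. \<Sum>\<beta>2\<in>UNIV. \<Sum>x\<in>X. \<Sum>x'\<in>X. T (\<beta>,x) (\<beta>2,x') * \<sigma> \<beta>2 \<beta> *
       (\<Sum>a\<in>UNIV. \<Sum>k\<in>K. (\<Sum>a'\<in>UNIV. L a a' * G a' (x',k)) * cnj (\<Sum>b'\<in>UNIV. L a b' * G b' (x,k))))"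
proof -
  have "qtrace (qmult (Mtest G T X K) (qtensor \<sigma> P)) =
    (\<Sum>\<beta>\<in>UNIV. \<Sum>b'\<in>UNIV. \<Sum>\<beta>2\<in>UNIV. \<Sum>a'\<in>UNIV. \<Sum>a\<in>UNIV. \<Sum>k\<in>K. \<Sum>x\<in>X. \<Sum>x'\<in>X.
       cnj (G b' (x,k)) * T (\<beta>,x) (\<beta>2,x') * G a' (x',k) * (\<sigma> \<beta>2 \<beta> * (L a a' * cnj (L a b'))))"
    unfolding qtrace_def qmult_def sum_UNIV_pair qtensor_def P
    by (simp add: Mtest_def sum_distrib_right sum_distrib_left)
  also have "\<dots> = (\<Sum>\<beta>\<in>UNIV. \<Sum>\<beta>2\<in>UNIV. \<Sum>b'\<in>UNIV. \<Sum>a'\<in>UNIV. \<Sum>a\<in>UNIV. \<Sum>k\<in>K. \<Sum>x\<in>X. \<Sum>x'\<in>X. cnj (G b' (x,k)) * T (\<beta>,x) (\<beta>2,x') * G a' (x',k) * (\<sigma> \<beta>2 \<beta> * (L a a' * cnj (L a b'))))"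
    apply (rule sum.cong[OF refl]) by (rule sum.swap)
  also have "\<dots> = (\<Sum>\<beta>\<in>UNIV. \<Sum>\<beta>2\<in>UNIV. \<Sum>a'\<in>UNIV. \<Sum>b'\<in>UNIV. \<Sum>a\<in>UNIV. \<Sum>k\<in>K. \<Sum>x\<in>X. \<Sum>x'\<in>X. cnj (G b' (x,k)) * T (\<beta>,x) (\<beta>2,x') * G a' (x',k) * (\<sigma> \<beta>2 \<beta> * (L a a' * cnj (L a b'))))"
    apply (rule sum.cong[OF refl]) apply (rule sum.cong[OF refl]) by (rule sum.swap)
  also have "\<dots> = (\<Sum>\<beta>\<in>UNIV. \<Sum>\<beta>2\<in>UNIV. \<Sum>a'\<in>UNIV. \<Sum>a\<in>UNIV. \<Sum>b'\<in>UNIV. \<Sum>k\<in>K. \<Sum>x\<in>X. \<Sum>x'\<in>X. cnj (G b' (x,k)) * T (\<beta>,x) (\<beta>2,x') * G a' (x',k) * (\<sigma> \<beta>2 \<beta> * (L a a' * cnj (L a b'))))"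
    apply (rule sum.cong[OF refl]) apply (rule sum.cong[OF refl]) apply (rule sum.cong[OF refl]) by (rule sum.swap)
  also have "\<dots> = (\<Sum>\<beta>\<in>UNIV. \<Sum>\<beta>2\<in>UNIV. \<Sum>a'\<in>UNIV. \<Sum>a\<in>UNIV. \<Sum>k\<in>K. \<Sum>b'\<in>UNIV. \<Sum>x\<in>X. \<Sum>x'\<in>X. cnj (G b' (x,k)) * T (\<beta>,x) (\<beta>2,x') * G a' (x',k) * (\<sigma> \<beta>2 \<beta> * (L a a' * cnj (L a b'))))"
    apply (rule sum.cong[OF refl]) apply (rule sum.cong[OF refl]) apply (rule sum.cong[OF refl]) apply (rule sum.cong[OF refl]) by (rule sum.swap)
  also have "\<dots> = (\<Sum>\<beta>\<in>UNIV. \<Sum>\<beta>2\<in>UNIV. \<Sum>a'\<in>UNIV. \<Sum>a\<in>UNIV. \<Sum>k\<in>K. \<Sum>x\<in>X. \<Sum>b'\<in>UNIV. \<Sum>x'\<in>X. cnj (G b' (x,k)) * T (\<beta>,x) (\<beta>2,x') * G a' (x',k) * (\<sigma> \<beta>2 \<beta> * (L a a' * cnj (L a b'))))"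
    apply (rule sum.cong[OF refl]) apply (rule sum.cong[OF refl]) apply (rule sum.cong[OF refl]) apply (rule sum.cong[OF refl]) apply (rule sum.cong[OF refl]) by (rule sum.swap)
  also have "\<dots> = (\<Sum>\<beta>\<in>UNIV. \<Sum>\<beta>2\<in>UNIV. \<Sum>a'\<in>UNIV. \<Sum>a\<in>UNIV. \<Sum>k\<in>K. \<Sum>x\<in>X. \<Sum>x'\<in>X. \<Sum>b'\<in>UNIV. cnj (G b' (x,k)) * T (\<beta>,x) (\<beta>2,x') * G a' (x',k) * (\<sigma> \<beta>2 \<beta> * (L a a' * cnj (L a b'))))"
    apply (rule sum.cong[OF refl]) apply (rule sum.cong[OF refl]) apply (rule sum.cong[OF refl]) apply (rule sum.cong[OF refl]) apply (rule sum.cong[OF refl]) apply (rule sum.cong[OF refl]) by (rule sum.swap)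
  also have "\<dots> = (\<Sum>\<beta>\<in>UNIV. \<Sum>\<beta>2\<in>UNIV. \<Sum>a\<in>UNIV. \<Sum>a'\<in>UNIV. \<Sum>k\<in>K. \<Sum>x\<in>X. \<Sum>x'\<in>X. \<Sum>b'\<in>UNIV. cnj (G b' (x,k)) * T (\<beta>,x) (\<beta>2,x') * G a' (x',k) * (\<sigma> \<beta>2 \<beta> * (L a a' * cnj (L a b'))))"
    apply (rule sum.cong[OF refl]) apply (rule sum.cong[OF refl]) by (rule sum.swap)
  also have "\<dots> = (\<Sum>\<beta>\<in>UNIV. \<Sum>\<beta>2\<in>UNIV. \<Sum>a\<in>UNIV. \<Sum>k\<in>K. \<Sum>a'\<in>UNIV. \<Sum>x\<in>X. \<Sum>x'\<in>X. \<Sum>b'\<in>UNIV. cnj (G b' (x,k)) * T (\<beta>,x) (\<beta>2,x') * G a' (x',k) * (\<sigma> \<beta>2 \<beta> * (L a a' * cnj (L a b'))))"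
    apply (rule sum.cong[OF refl]) apply (rule sum.cong[OF refl]) apply (rule sum.cong[OF refl]) by (rule sum.swap)
  also have "\<dots> = (\<Sum>\<beta>\<in>UNIV. \<Sum>\<beta>2\<in>UNIV. \<Sum>a\<in>UNIV. \<Sum>k\<in>K. \<Sum>x\<in>X. \<Sum>a'\<in>UNIV. \<Sum>x'\<in>X. \<Sum>b'\<in>UNIV. cnj (G b' (x,k)) * T (\<beta>,x) (\<beta>2,x') * G a' (x',k) * (\<sigma> \<beta>2 \<beta> * (L a a' * cnj (L a b'))))"
    apply (rule sum.cong[OF refl]) apply (rule sum.cong[OF refl]) apply (rule sum.cong[OF refl]) apply (rule sum.cong[OF refl]) by (rule sum.swap)
  also have "\<dots> = (\<Sum>\<beta>\<in>UNIV. \<Sum>\<beta>2\<in>UNIV. \<Sum>a\<in>UNIV. \<Sum>k\<in>K. \<Sum>x\<in>X. \<Sum>x'\<in>X. \<Sum>a'\<in>UNIV. \<Sum>b'\<in>UNIV. cnj (G b' (x,k)) * T (\<beta>,x) (\<beta>2,x') * G a' (x',k) * (\<sigma> \<beta>2 \<beta> * (L a a' * cnj (L a b'))))"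
    apply (rule sum.cong[OF refl]) apply (rule sum.cong[OF refl]) apply (rule sum.cong[OF refl]) apply (rule sum.cong[OF refl]) apply (rule sum.cong[OF refl]) by (rule sum.swap)
  also have "\<dots> = (\<Sum>\<beta>\<in>UNIV. \<Sum>\<beta>2\<in>UNIV. \<Sum>a\<in>UNIV. \<Sum>x\<in>X. \<Sum>k\<in>K. \<Sum>x'\<in>X. \<Sum>a'\<in>UNIV. \<Sum>b'\<in>UNIV. cnj (G b' (x,k)) * T (\<beta>,x) (\<beta>2,x') * G a' (x',k) * (\<sigma> \<beta>2 \<beta> * (L a a' * cnj (L a b'))))"
    apply (rule sum.cong[OF refl]) apply (rule sum.cong[OF refl]) apply (rule sum.cong[OF refl]) by (rule sum.swap)
  also have "\<dots> = (\<Sum>\<beta>\<in>UNIV. \<Sum>\<beta>2\<in>UNIV. \<Sum>a\<in>UNIV. \<Sum>x\<in>X. \<Sum>x'\<in>X. \<Sum>k\<in>K. \<Sum>a'\<in>UNIV. \<Sum>b'\<in>UNIV. cnj (G b' (x,k)) * T (\<beta>,x) (\<beta>2,x') * G a' (x',k) * (\<sigma> \<beta>2 \<beta> * (L a a' * cnj (L a b'))))"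
    apply (rule sum.cong[OF refl]) apply (rule sum.cong[OF refl]) apply (rule sum.cong[OF refl]) apply (rule sum.cong[OF refl]) by (rule sum.swap)
  also have "\<dots> = (\<Sum>\<beta>\<in>UNIV. \<Sum>\<beta>2\<in>UNIV. \<Sum>x\<in>X. \<Sum>a\<in>UNIV. \<Sum>x'\<in>X. \<Sum>k\<in>K. \<Sum>a'\<in>UNIV. \<Sum>b'\<in>UNIV. cnj (G b' (x,k)) * T (\<beta>,x) (\<beta>2,x') * G a' (x',k) * (\<sigma> \<beta>2 \<beta> * (L a a' * cnj (L a b'))))"
    apply (rule sum.cong[OF refl]) apply (rule sum.cong[OF refl]) by (rule sum.swap)
  also have "\<dots> = (\<Sum>\<beta>\<in>UNIV. \<Sum>\<beta>2\<in>UNIV. \<Sum>x\<in>X. \<Sum>x'\<in>X. \<Sum>a\<in>UNIV. \<Sum>k\<in>K. \<Sum>a'\<in>UNIV. \<Sum>b'\<in>UNIV. cnj (G b' (x,k)) * T (\<beta>,x) (\<beta>2,x') * G a' (x',k) * (\<sigma> \<beta>2 \<beta> * (L a a' * cnj (L a b'))))"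
    apply (rule sum.cong[OF refl]) apply (rule sum.cong[OF refl]) apply (rule sum.cong[OF refl]) by (rule sum.swap)
  also have "\<dots> = (\<Sum>\<beta>\<in>UNIV. \<Sum>\<beta>2\<in>UNIV. \<Sum>x\<in>X. \<Sum>x'\<in>X. \<Sum>a\<in>UNIV. \<Sum>k\<in>K. \<Sum>a'\<in>UNIV. \<Sum>b'\<in>UNIV.
       T (\<beta>,x) (\<beta>2,x') * \<sigma> \<beta>2 \<beta> * ((L a a' * G a' (x',k)) * cnj (L a b' * G b' (x,k))))"
    by (intro sum.cong refl) (simp add: mult_ac)
  also have "\<dots> = (\<Sum>\<beta>\<in>UNIV. \<Sum>\<beta>2\<in>UNIV. \<Sum>x\<in>X. \<Sum>x'\<in>X. T (\<beta>,x) (\<beta>2,x') * \<sigma> \<beta>2 \<beta> *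
       (\<Sum>a\<in>UNIV. \<Sum>k\<in>K. (\<Sum>a'\<in>UNIV. L a a' * G a' (x',k)) * cnj (\<Sum>b'\<in>UNIV. L a b' * G b' (x,k))))"
    by (intro sum.cong refl) (simp only: sum_product cnj_sum, simp only: sum_distrib_left)
  finally show ?thesis .
qed

lemma qlinear_scale:
  assumes "qlinear N"
  shows "N (\<lambda>i j. X i j / c) = (\<lambda>i j. N X i j / c)"
proof -
  have "\<forall>c X. N (\<lambda>i j. c * X i j) = (\<lambda>i j. c * N X i j)"
    using assms unfolding qlinear_def by (rule conjunct2)
  from this[rule_format, of "1/c" X] show ?thesis by simp
qed

lemma C4_lemma:
  fixes Nch :: "('a::finite) qop \<Rightarrow> ('b::finite) qop"
    and Enc :: "nat \<Rightarrow> ('ea::finite) qop \<Rightarrow> 'a qop" and \<theta> :: "'ea \<times> ('eb::finite) \<Rightarrow> complex"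
    and Dec :: "nat \<Rightarrow> ('b \<times> 'eb) qop" and L :: "'a qop"
    and G :: "'a \<Rightarrow> ((nat \<times> 'eb) \<times> ('a \<times> (nat \<times> 'eb))) \<Rightarrow> complex"
  assumes ch: "channel Nch" and K1: "K \<ge> 1"
    and part1: "\<forall>a b. \<forall>x\<in>{1..K} \<times> UNIV. \<forall>x'\<in>{1..K} \<times> UNIV. omega K Enc \<theta> (a,x) (b,x') =
        (\<Sum>k\<in>UNIV\<times>({1..K} \<times> UNIV). (\<Sum>a'\<in>UNIV. L a a' * G a' (x,k)) * cnj (\<Sum>b'\<in>UNIV. L b b' * G b' (x',k)))"
    and err: "\<forall>m\<in>{1..K}. 1 - Re (qtrace (qmult (Dec m) (apply_first Nch (apply_first (Enc m) (ketbra \<theta>))))) \<le> \<epsilon>"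
  shows "Re (qtrace (qmult (Mtest G (Tdec Dec) ({1..K} \<times> UNIV) (UNIV\<times>({1..K} \<times> UNIV)))
            (apply_first Nch (ketbra (\<lambda>(a,a'). L a a'))))) \<ge> 1 - \<epsilon>"
proof -
  define Xs where "Xs = {1..K} \<times> (UNIV :: 'eb set)"
  define \<rho> where "\<rho> m = apply_first (Enc m) (ketbra \<theta>)" for m
  define af where "af m = apply_first Nch (\<rho> m)" for m
  have lin: "qlinear Nch" using ch unfolding channel_def by blast
  have finK: "finite ((UNIV :: 'a set) \<times> Xs)" unfolding Xs_def by (intro finite_cartesian_product) auto
  have "qtrace (qmult (Mtest G (Tdec Dec) Xs (UNIV\<times>Xs)) (apply_first Nch (ketbra (\<lambda>(a,a'). L a a')))) =
    (\<Sum>\<beta>\<in>UNIV. \<Sum>\<beta>2\<in>UNIV. \<Sum>x\<in>Xs. \<Sum>x'\<in>Xs. Tdec Dec (\<beta>,x) (\<beta>2,x') *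
       Nch (\<lambda>a a2. \<Sum>k\<in>UNIV\<times>Xs. (\<Sum>a'\<in>UNIV. L a a' * G a' (x',k)) * cnj (\<Sum>b'\<in>UNIV. L a2 b' * G b' (x,k))) \<beta>2 \<beta>)"
    by (rule trace_M_channel[OF lin finK])
  also have "\<dots> = (\<Sum>\<beta>\<in>UNIV. \<Sum>\<beta>2\<in>UNIV. \<Sum>x\<in>Xs. \<Sum>x'\<in>Xs. Tdec Dec (\<beta>,x) (\<beta>2,x') *
       Nch (\<lambda>a a2. omega K Enc \<theta> (a,x') (a2,x)) \<beta>2 \<beta>)"
  proof (intro sum.cong refl arg_cong2[where f="(*)"])
    fix x x' \<beta> \<beta>2 assume x: "x \<in> Xs" and x': "x' \<in> Xs"
    have eq: "\<And>a a2. omega K Enc \<theta> (a,x') (a2,x) =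
       (\<Sum>k\<in>UNIV\<times>Xs. (\<Sum>a'\<in>UNIV. L a a' * G a' (x',k)) * cnj (\<Sum>b'\<in>UNIV. L a2 b' * G b' (x,k)))"
      using part1 x x' unfolding Xs_def by blast
    show "Nch (\<lambda>a a2. \<Sum>k\<in>UNIV\<times>Xs. (\<Sum>a'\<in>UNIV. L a a' * G a' (x',k)) * cnj (\<Sum>b'\<in>UNIV. L a2 b' * G b' (x,k))) \<beta>2 \<beta>
       = Nch (\<lambda>a a2. omega K Enc \<theta> (a,x') (a2,x)) \<beta>2 \<beta>"
      by (simp only: eq)
  qed
  also have "\<dots> = (\<Sum>\<beta>\<in>UNIV. \<Sum>\<beta>2\<in>UNIV. \<Sum>m\<in>{1..K}. \<Sum>e\<in>UNIV. \<Sum>m2\<in>{1..K}. \<Sum>e2\<in>UNIV.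
       (if m = m2 then Dec m (\<beta>,e) (\<beta>2,e2) * (af m (\<beta>2,e2) (\<beta>,e) / of_nat K) else 0))"
  proof -
    have "Tdec Dec (\<beta>,(m,e)) (\<beta>2,(m2,e2)) * Nch (\<lambda>a a2. omega K Enc \<theta> (a,(m2,e2)) (a2,(m,e))) \<beta>2 \<beta>
      = (if m = m2 then Dec m (\<beta>,e) (\<beta>2,e2) * (af m (\<beta>2,e2) (\<beta>,e) / of_nat K) else 0)" for \<beta> \<beta>2 m e m2 e2
    proof (cases "m = m2")
      case True
      have "Nch (\<lambda>a a2. omega K Enc \<theta> (a,(m2,e2)) (a2,(m,e))) = Nch (\<lambda>a a2. \<rho> m (a,e2) (a2,e) / of_nat K)"
        unfolding omega_def \<rho>_def using True by simp
      also have "\<dots> = (\<lambda>i j. Nch (\<lambda>a a2. \<rho> m (a,e2) (a2,e)) i j / of_nat K)"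
        by (rule qlinear_scale[OF lin])
      finally show ?thesis using True unfolding Tdec_def af_def apply_first_def by simp
    next
      case False
      then show ?thesis unfolding Tdec_def by simp
    qed
    then show ?thesis unfolding Xs_def sum_times by simp
  qed
  also have "\<dots> = (\<Sum>\<beta>\<in>UNIV. \<Sum>m\<in>{1..K}. \<Sum>\<beta>2\<in>UNIV. \<Sum>e\<in>UNIV. \<Sum>m2\<in>{1..K}. \<Sum>e2\<in>UNIV. (if m = m2 then Dec m (\<beta>,e) (\<beta>2,e2) * (af m (\<beta>2,e2) (\<beta>,e) / of_nat K) else 0))"
    apply (rule sum.cong[OF refl]) by (rule sum.swap)
  also have "\<dots> = (\<Sum>\<beta>\<in>UNIV. \<Sum>m\<in>{1..K}. \<Sum>e\<in>UNIV. \<Sum>\<beta>2\<in>UNIV. \<Sum>m2\<in>{1..K}. \<Sum>e2\<in>UNIV. (if m = m2 then Dec m (\<beta>,e) (\<beta>2,e2) * (af m (\<beta>2,e2) (\<beta>,e) / of_nat K) else 0))"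
    apply (rule sum.cong[OF refl]) apply (rule sum.cong[OF refl]) by (rule sum.swap)
  also have "\<dots> = (\<Sum>\<beta>\<in>UNIV. \<Sum>m\<in>{1..K}. \<Sum>e\<in>UNIV. \<Sum>\<beta>2\<in>UNIV. \<Sum>e2\<in>UNIV. \<Sum>m2\<in>{1..K}. (if m = m2 then Dec m (\<beta>,e) (\<beta>2,e2) * (af m (\<beta>2,e2) (\<beta>,e) / of_nat K) else 0))"
    apply (rule sum.cong[OF refl]) apply (rule sum.cong[OF refl]) apply (rule sum.cong[OF refl]) apply (rule sum.cong[OF refl]) by (rule sum.swap)
  also have "\<dots> = (\<Sum>m\<in>{1..K}. \<Sum>\<beta>\<in>UNIV. \<Sum>e\<in>UNIV. \<Sum>\<beta>2\<in>UNIV. \<Sum>e2\<in>UNIV. \<Sum>m2\<in>{1..K}. (if m = m2 then Dec m (\<beta>,e) (\<beta>2,e2) * (af m (\<beta>2,e2) (\<beta>,e) / of_nat K) else 0))"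
    by (rule sum.swap)
  also have "\<dots> = (\<Sum>m\<in>{1..K}. \<Sum>\<beta>\<in>UNIV. \<Sum>e\<in>UNIV. \<Sum>\<beta>2\<in>UNIV. \<Sum>e2\<in>UNIV.
       Dec m (\<beta>,e) (\<beta>2,e2) * (af m (\<beta>2,e2) (\<beta>,e) / of_nat K))"
    by (intro sum.cong refl) (simp add: if_distrib if_distribR cong: if_cong)
  also have "\<dots> = (\<Sum>m\<in>{1..K}. qtrace (qmult (Dec m) (af m)) / of_nat K)"
    unfolding qtrace_def qmult_def sum_UNIV_pair by (simp add: sum_divide_distrib)
  finally have tr: "qtrace (qmult (Mtest G (Tdec Dec) Xs (UNIV\<times>Xs)) (apply_first Nch (ketbra (\<lambda>(a,a'). L a a'))))
      = (\<Sum>m\<in>{1..K}. qtrace (qmult (Dec m) (af m)) / of_nat K)" .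
  have "Re (\<Sum>m\<in>{1..K}. qtrace (qmult (Dec m) (af m)) / of_nat K) = (\<Sum>m\<in>{1..K}. Re (qtrace (qmult (Dec m) (af m))) / real K)"
    by (simp add: Re_sum)
  also have "\<dots> \<ge> (\<Sum>m\<in>{1..K}. (1 - \<epsilon>) / real K)"
  proof (rule sum_mono)
    fix m assume m: "m \<in> {1..K}"
    have "1 - \<epsilon> \<le> Re (qtrace (qmult (Dec m) (af m)))"
      using err m unfolding af_def \<rho>_def by fastforce
    then show "(1 - \<epsilon>) / real K \<le> Re (qtrace (qmult (Dec m) (af m))) / real K"
      by (rule divide_right_mono) simp
  qed
  finally have "Re (\<Sum>m\<in>{1..K}. qtrace (qmult (Dec m) (af m)) / of_nat K) \<ge> 1 - \<epsilon>"
    using K1 by simp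
  then show ?thesis using tr unfolding Xs_def by simp
qed

lemma unit_trace:
  fixes \<theta> :: "('ea::finite) \<times> ('eb::finite) \<Rightarrow> complex"
  assumes "unit_vec \<theta>"
  shows "(\<Sum>e\<in>UNIV. \<Sum>c\<in>UNIV. \<theta> (c,e) * cnj (\<theta> (c,e))) = 1"
proof -
  have "(\<Sum>e\<in>UNIV. \<Sum>c\<in>UNIV. \<theta> (c,e) * cnj (\<theta> (c,e))) = (\<Sum>c\<in>UNIV. \<Sum>e\<in>UNIV. \<theta> (c,e) * cnj (\<theta> (c,e)))"
    by (rule sum.swap)
  also have "\<dots> = (\<Sum>i\<in>UNIV. \<theta> i * cnj (\<theta> i))" unfolding sum_UNIV_pair ..
  also have "\<dots> = of_real (\<Sum>i\<in>UNIV. (cmod (\<theta> i))^2)"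
    by (simp only: of_real_sum complex_norm_square)
  also have "\<dots> = 1" using assms unfolding unit_vec_def by simp
  finally show ?thesis .
qed

lemma C5_lemma:
  fixes Nch :: "('a::finite) qop \<Rightarrow> ('b::finite) qop"
    and Enc :: "nat \<Rightarrow> ('ea::finite) qop \<Rightarrow> 'a qop" and \<theta> :: "'ea \<times> ('eb::finite) \<Rightarrow> complex"
    and Dec :: "nat \<Rightarrow> ('b \<times> 'eb) qop" and L :: "'a qop"
    and G :: "'a \<Rightarrow> ((nat \<times> 'eb) \<times> ('a \<times> (nat \<times> 'eb))) \<Rightarrow> complex" and \<sigma> :: "'b qop"
  assumes ch: "channel Nch" and K1: "K \<ge> 1"
    and encch: "\<forall>m\<in>{1..K}. channel (Enc m)" and pv: "povm K Dec" and u\<theta>: "unit_vec \<theta>"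
    and part1: "\<forall>a b. \<forall>x\<in>{1..K} \<times> UNIV. \<forall>x'\<in>{1..K} \<times> UNIV. omega K Enc \<theta> (a,x) (b,x') =
        (\<Sum>k\<in>UNIV\<times>({1..K} \<times> UNIV). (\<Sum>a'\<in>UNIV. L a a' * G a' (x,k)) * cnj (\<Sum>b'\<in>UNIV. L b b' * G b' (x',k)))"
    and dens: "density \<sigma>"
  shows "Re (qtrace (qmult (Mtest G (Tdec Dec) ({1..K} \<times> UNIV) (UNIV\<times>({1..K} \<times> UNIV)))
            (qtensor \<sigma> (ptrace1 (apply_first Nch (ketbra (\<lambda>(a,a'). L a a'))))))) = 1 / real K"
proof -
  define Xs where "Xs = {1..K} \<times> (UNIV :: 'eb set)"
  define \<rho> where "\<rho> m = apply_first (Enc m) (ketbra \<theta>)" for m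
  define \<theta>E where "\<theta>E e2 e = (\<Sum>c\<in>UNIV. \<theta> (c,e2) * cnj (\<theta> (c,e)))" for e2 e
  have P: "ptrace1 (apply_first Nch (ketbra (\<lambda>(a,a'). L a a'))) a' b' = (\<Sum>a\<in>UNIV. L a a' * cnj (L a b'))" for a' b'
  proof -
    have "ptrace1 (apply_first Nch (ketbra (\<lambda>(a,a'). L a a'))) a' b' = qtrace (Nch (\<lambda>c c'. L c a' * cnj (L c' b')))"
      unfolding ptrace1_def apply_first_def ketbra_def qtrace_def by simp
    also have "\<dots> = qtrace (\<lambda>c c'. L c a' * cnj (L c' b'))" using ch unfolding channel_def by blast
    finally show ?thesis unfolding qtrace_def by simp
  qed
  have tr\<rho>: "(\<Sum>a\<in>UNIV. \<rho> m (a,e2) (a,e)) = \<theta>E e2 e" if m: "m \<in> {1..K}" for m e2 e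
  proof -
    have "(\<Sum>a\<in>UNIV. \<rho> m (a,e2) (a,e)) = qtrace (Enc m (\<lambda>c c'. \<theta> (c,e2) * cnj (\<theta> (c',e))))"
      unfolding \<rho>_def apply_first_def ketbra_def qtrace_def by simp
    also have "\<dots> = qtrace (\<lambda>c c'. \<theta> (c,e2) * cnj (\<theta> (c',e)))" using encch m unfolding channel_def by blast
    finally show ?thesis unfolding qtrace_def \<theta>E_def by simp
  qed
  have "qtrace (qmult (Mtest G (Tdec Dec) Xs (UNIV\<times>Xs)) (qtensor \<sigma> (ptrace1 (apply_first Nch (ketbra (\<lambda>(a,a'). L a a')))))) =
    (\<Sum>\<beta>\<in>UNIV. \<Sum>\<beta>2\<in>UNIV. \<Sum>x\<in>Xs. \<Sum>x'\<in>Xs. Tdec Dec (\<beta>,x) (\<beta>2,x') * \<sigma> \<beta>2 \<beta> *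
       (\<Sum>a\<in>UNIV. \<Sum>k\<in>UNIV\<times>Xs. (\<Sum>a'\<in>UNIV. L a a' * G a' (x',k)) * cnj (\<Sum>b'\<in>UNIV. L a b' * G b' (x,k))))"
    by (rule trace_M_tensor[OF P])
  also have "\<dots> = (\<Sum>\<beta>\<in>UNIV. \<Sum>\<beta>2\<in>UNIV. \<Sum>x\<in>Xs. \<Sum>x'\<in>Xs. Tdec Dec (\<beta>,x) (\<beta>2,x') * \<sigma> \<beta>2 \<beta> *
       (\<Sum>a\<in>UNIV. omega K Enc \<theta> (a,x') (a,x)))"
  proof (intro sum.cong refl arg_cong2[where f="(*)"])
    fix x x' a assume x: "x \<in> Xs" and x': "x' \<in> Xs"
    show "(\<Sum>k\<in>UNIV\<times>Xs. (\<Sum>a'\<in>UNIV. L a a' * G a' (x',k)) * cnj (\<Sum>b'\<in>UNIV. L a b' * G b' (x,k)))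
       = omega K Enc \<theta> (a,x') (a,x)"
    proof (rule sym)
      show "omega K Enc \<theta> (a,x') (a,x) = (\<Sum>k\<in>UNIV\<times>Xs. (\<Sum>a'\<in>UNIV. L a a' * G a' (x',k)) * cnj (\<Sum>b'\<in>UNIV. L a b' * G b' (x,k)))"
        using part1 x x' unfolding Xs_def by blast
    qed
  qed
  also have "\<dots> = (\<Sum>\<beta>\<in>UNIV. \<Sum>\<beta>2\<in>UNIV. \<Sum>m\<in>{1..K}. \<Sum>e\<in>UNIV. \<Sum>m2\<in>{1..K}. \<Sum>e2\<in>UNIV.
       (if m = m2 then Dec m (\<beta>,e) (\<beta>2,e2) * \<sigma> \<beta>2 \<beta> * (\<theta>E e2 e / of_nat K) else 0))"
  proof -
    have "Tdec Dec (\<beta>,(m,e)) (\<beta>2,(m2,e2)) * \<sigma> \<beta>2 \<beta> * (\<Sum>a\<in>UNIV. omega K Enc \<theta> (a,(m2,e2)) (a,(m,e)))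
      = (if m = m2 then Dec m (\<beta>,e) (\<beta>2,e2) * \<sigma> \<beta>2 \<beta> * (\<theta>E e2 e / of_nat K) else 0)"
      if m: "m \<in> {1..K}" for \<beta> \<beta>2 m e m2 e2
    proof (cases "m = m2")
      case True
      have "(\<Sum>a\<in>UNIV. omega K Enc \<theta> (a,(m2,e2)) (a,(m,e))) = (\<Sum>a\<in>UNIV. \<rho> m (a,e2) (a,e)) / of_nat K"
        unfolding omega_def \<rho>_def using True by (simp add: sum_divide_distrib)
      then show ?thesis using True tr\<rho>[OF m] unfolding Tdec_def by simp
    next
      case False
      then show ?thesis unfolding Tdec_def by simp
    qed
    then show ?thesis unfolding Xs_def sum_times by (intro sum.cong refl) auto
  qed
  also have "\<dots> = (\<Sum>\<beta>\<in>UNIV. \<Sum>\<beta>2\<in>UNIV. \<Sum>e\<in>UNIV. \<Sum>m\<in>{1..K}. \<Sum>m2\<in>{1..K}. \<Sum>e2\<in>UNIV. (if m = m2 then Dec m (\<beta>,e) (\<beta>2,e2) * \<sigma> \<beta>2 \<beta> * (\<theta>E e2 e / of_nat K) else 0))"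
    apply (rule sum.cong[OF refl]) apply (rule sum.cong[OF refl]) by (rule sum.swap)
  also have "\<dots> = (\<Sum>\<beta>\<in>UNIV. \<Sum>\<beta>2\<in>UNIV. \<Sum>e\<in>UNIV. \<Sum>m\<in>{1..K}. \<Sum>e2\<in>UNIV. \<Sum>m2\<in>{1..K}. (if m = m2 then Dec m (\<beta>,e) (\<beta>2,e2) * \<sigma> \<beta>2 \<beta> * (\<theta>E e2 e / of_nat K) else 0))"
    apply (rule sum.cong[OF refl]) apply (rule sum.cong[OF refl]) apply (rule sum.cong[OF refl]) apply (rule sum.cong[OF refl]) by (rule sum.swap)
  also have "\<dots> = (\<Sum>\<beta>\<in>UNIV. \<Sum>\<beta>2\<in>UNIV. \<Sum>e\<in>UNIV. \<Sum>e2\<in>UNIV. \<Sum>m\<in>{1..K}. \<Sum>m2\<in>{1..K}. (if m = m2 then Dec m (\<beta>,e) (\<beta>2,e2) * \<sigma> \<beta>2 \<beta> * (\<theta>E e2 e / of_nat K) else 0))"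
    apply (rule sum.cong[OF refl]) apply (rule sum.cong[OF refl]) apply (rule sum.cong[OF refl]) by (rule sum.swap)
  also have "\<dots> = (\<Sum>\<beta>\<in>UNIV. \<Sum>\<beta>2\<in>UNIV. \<Sum>e\<in>UNIV. \<Sum>e2\<in>UNIV. \<Sum>m\<in>{1..K}.
       Dec m (\<beta>,e) (\<beta>2,e2) * \<sigma> \<beta>2 \<beta> * (\<theta>E e2 e / of_nat K))"
    by (intro sum.cong refl) (simp add: if_distrib if_distribR cong: if_cong)
  also have "\<dots> = (\<Sum>\<beta>\<in>UNIV. \<Sum>\<beta>2\<in>UNIV. \<Sum>e\<in>UNIV. \<Sum>e2\<in>UNIV.
       qid (\<beta>,e) (\<beta>2,e2) * \<sigma> \<beta>2 \<beta> * (\<theta>E e2 e / of_nat K))"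
  proof (intro sum.cong refl)
    fix \<beta> \<beta>2 e e2
    have "(\<Sum>m\<in>{1..K}. Dec m (\<beta>,e) (\<beta>2,e2)) = qid (\<beta>,e) (\<beta>2,e2)"
    proof -
      have "(\<lambda>i j. \<Sum>m\<in>{1..K}. Dec m i j) = qid" using pv unfolding povm_def by blast
      then show ?thesis by (rule fun_cong[THEN fun_cong])
    qed
    moreover have "(\<Sum>m\<in>{1..K}. Dec m (\<beta>,e) (\<beta>2,e2) * \<sigma> \<beta>2 \<beta> * (\<theta>E e2 e / of_nat K)) =
       (\<Sum>m\<in>{1..K}. Dec m (\<beta>,e) (\<beta>2,e2)) * \<sigma> \<beta>2 \<beta> * (\<theta>E e2 e / of_nat K)"
      by (simp only: sum_distrib_right)
    ultimately show "(\<Sum>m\<in>{1..K}. Dec m (\<beta>,e) (\<beta>2,e2) * \<sigma> \<beta>2 \<beta> * (\<theta>E e2 e / of_nat K)) =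
       qid (\<beta>,e) (\<beta>2,e2) * \<sigma> \<beta>2 \<beta> * (\<theta>E e2 e / of_nat K)"
      by simp
  qed
  also have "\<dots> = (\<Sum>\<beta>\<in>UNIV. \<Sum>e\<in>UNIV. \<sigma> \<beta> \<beta> * (\<theta>E e e / of_nat K))"
  proof -
    have "(\<Sum>\<beta>\<in>UNIV. \<Sum>\<beta>2\<in>UNIV. \<Sum>e\<in>UNIV. \<Sum>e2\<in>UNIV.
       qid (\<beta>,e) (\<beta>2,e2) * \<sigma> \<beta>2 \<beta> * (\<theta>E e2 e / of_nat K)) =
       (\<Sum>\<beta>\<in>UNIV. \<Sum>\<beta>2\<in>UNIV. (if \<beta> = \<beta>2 then (\<Sum>e\<in>UNIV. \<Sum>e2\<in>UNIV.
          (if e = e2 then \<sigma> \<beta>2 \<beta> * (\<theta>E e2 e / of_nat K) else 0)) else 0))"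
    proof (intro sum.cong refl)
      fix \<beta> \<beta>2 :: 'b
      show "(\<Sum>e\<in>UNIV. \<Sum>e2\<in>UNIV. qid (\<beta>,e) (\<beta>2,e2) * \<sigma> \<beta>2 \<beta> * (\<theta>E e2 e / of_nat K)) =
        (if \<beta> = \<beta>2 then (\<Sum>e\<in>UNIV. \<Sum>e2\<in>UNIV.
          (if e = e2 then \<sigma> \<beta>2 \<beta> * (\<theta>E e2 e / of_nat K) else 0)) else 0)"
      proof (cases "\<beta> = \<beta>2")
        case True
        have "(\<Sum>e\<in>UNIV. \<Sum>e2\<in>UNIV. qid (\<beta>,e) (\<beta>2,e2) * \<sigma> \<beta>2 \<beta> * (\<theta>E e2 e / of_nat K)) =
          (\<Sum>e\<in>UNIV. \<Sum>e2\<in>UNIV. (if e = e2 then \<sigma> \<beta>2 \<beta> * (\<theta>E e2 e / of_nat K) else 0))"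
          by (intro sum.cong refl) (simp add: qid_def True)
        then show ?thesis using True by (simp only: if_True refl)
      next
        case False
        then show ?thesis by (simp add: qid_def)
      qed
    qed
    also have "\<dots> = (\<Sum>\<beta>\<in>UNIV. \<Sum>e\<in>UNIV. \<sigma> \<beta> \<beta> * (\<theta>E e e / of_nat K))"
      by simp
    finally show ?thesis .
  qed
  also have "\<dots> = (\<Sum>\<beta>\<in>UNIV. \<sigma> \<beta> \<beta>) * (\<Sum>e\<in>UNIV. \<theta>E e e) / of_nat K"
    by (simp add: sum_product sum_divide_distrib)
  also have "\<dots> = 1 / of_nat K"
  proof -
    have "(\<Sum>\<beta>\<in>UNIV. \<sigma> \<beta> \<beta>) = 1" using dens unfolding density_def qtrace_def by blast
    moreover have "(\<Sum>e\<in>UNIV. \<theta>E e e) = 1" unfolding \<theta>E_def using unit_trace[OF u\<theta>] .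
    ultimately show ?thesis by simp
  qed
  finally show ?thesis unfolding Xs_def by simp
qed

lemma omega_trace:
  fixes Enc :: "nat \<Rightarrow> ('ea::finite) qop \<Rightarrow> ('a::finite) qop" and \<theta> :: "'ea \<times> ('eb::finite) \<Rightarrow> complex"
  assumes encch: "\<forall>m\<in>{1..K}. channel (Enc m)" and u\<theta>: "unit_vec \<theta>" and K1: "K \<ge> 1"
  shows "(\<Sum>a\<in>UNIV. \<Sum>x\<in>{1..K} \<times> UNIV. omega K Enc \<theta> (a,x) (a,x)) = 1"
proof -
  define \<rho> where "\<rho> m = apply_first (Enc m) (ketbra \<theta>)" for m
  have kt: "qtrace (ketbra \<theta>) = 1"
  proof -
    have "qtrace (ketbra \<theta>) = of_real (\<Sum>i\<in>UNIV. (cmod (\<theta> i))^2)"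
      unfolding qtrace_def ketbra_def by (simp only: of_real_sum complex_norm_square)
    then show ?thesis using u\<theta> unfolding unit_vec_def by simp
  qed
  have tr: "qtrace (\<rho> m) = 1" if "m \<in> {1..K}" for m
    unfolding \<rho>_def using channel_trace_apply_first[of "Enc m" "ketbra \<theta>"] encch that kt by simp
  have "(\<Sum>a\<in>UNIV. \<Sum>x\<in>{1..K} \<times> UNIV. omega K Enc \<theta> (a,x) (a,x)) =
      (\<Sum>a\<in>UNIV. \<Sum>m\<in>{1..K}. \<Sum>e\<in>UNIV. \<rho> m (a,e) (a,e) / of_nat K)"
    unfolding sum_times omega_def \<rho>_def by simp
  also have "\<dots> = (\<Sum>m\<in>{1..K}. \<Sum>a\<in>UNIV. \<Sum>e\<in>UNIV. \<rho> m (a,e) (a,e) / of_nat K)"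
    by (rule sum.swap)
  also have "\<dots> = (\<Sum>m\<in>{1..K}. qtrace (\<rho> m) / of_nat K)"
    unfolding qtrace_def sum_UNIV_pair by (simp add: sum_divide_distrib)
  also have "\<dots> = (\<Sum>m\<in>{1..K}. 1 / of_nat K)" using tr by simp
  also have "\<dots> = 1" using K1 by simp
  finally show ?thesis .
qed

theorem theorem2:
  fixes N :: "nat \<Rightarrow> ('a::finite) qop \<Rightarrow> ('b::finite) qop"
    and s K :: nat and \<epsilon> R :: real
    and \<theta> :: "('ea::finite) \<times> ('eb::finite) \<Rightarrow> complex"
    and Enc :: "nat \<Rightarrow> 'ea qop \<Rightarrow> 'a qop"
    and Dec :: "nat \<Rightarrow> ('b \<times> 'eb) qop"
  assumes "s \<ge> 1"
    and "\<forall>i\<in>{1..s}. channel (N i)"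
    and "0 < \<epsilon>" and "\<epsilon> < 1"
    and "K \<ge> 1" and "2 powr R = real K"
    and "EA_code K \<epsilon> s N \<theta> Enc Dec"
  shows "ereal R \<le> (SUP \<psi> \<in> {\<psi> :: 'a \<times> 'a \<Rightarrow> complex. unit_vec \<psi>}.
                     (INF i \<in> {1..s}. IH \<epsilon> (apply_first (N i) (ketbra \<psi>))))"
proof -
  have u\<theta>: "unit_vec \<theta>" and encch: "\<forall>m\<in>{1..K}. channel (Enc m)" and pv: "povm K Dec"
    and err: "\<forall>m\<in>{1..K}. \<forall>i\<in>{1..s}.
        1 - Re (qtrace (qmult (Dec m) (apply_first (N i) (apply_first (Enc m) (ketbra \<theta>))))) \<le> \<epsilon>"
    using assms(7) unfolding EA_code_def by auto
  define Xs where "Xs = {1..K} \<times> (UNIV :: 'eb set)"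
  have finXs: "finite Xs" unfolding Xs_def by (intro finite_cartesian_product) auto
  have psd\<omega>: "psd_on (UNIV \<times> Xs) (omega K Enc \<theta>)" unfolding Xs_def by (rule omega_psd[OF encch])
  obtain L :: "'a qop" and G :: "'a \<Rightarrow> ((nat \<times> 'eb) \<times> ('a \<times> (nat \<times> 'eb))) \<Rightarrow> complex" where
    part1: "\<forall>a b. \<forall>x\<in>Xs. \<forall>x'\<in>Xs. omega K Enc \<theta> (a,x) (b,x') =
        (\<Sum>k\<in>UNIV\<times>Xs. (\<Sum>a'\<in>UNIV. L a a' * G a' (x,k)) * cnj (\<Sum>b'\<in>UNIV. L b b' * G b' (x',k)))"
    and part2: "\<forall>v. (\<Sum>y\<in>Xs \<times> (UNIV\<times>Xs). (cmod (\<Sum>a'\<in>UNIV. G a' y * v a'))^2) \<le> (\<Sum>a'\<in>UNIV. (cmod (v a'))^2)"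
    and part3: "(\<Sum>a\<in>UNIV. \<Sum>a'\<in>UNIV. (cmod (L a a'))^2) = Re (\<Sum>a\<in>UNIV. \<Sum>x\<in>Xs. omega K Enc \<theta> (a,x) (a,x))"
    using factor[OF finXs psd\<omega>] by blast
  define \<psi> where "\<psi> = (\<lambda>(a::'a,a'::'a). L a a')"
  define M where "M = Mtest G (Tdec Dec) Xs (UNIV \<times> Xs)"
  have S1: "(\<Sum>a\<in>UNIV. \<Sum>x\<in>Xs. omega K Enc \<theta> (a,x) (a,x)) = 1"
    unfolding Xs_def by (rule omega_trace[OF encch u\<theta> assms(5)])
  have L1: "(\<Sum>a\<in>UNIV. \<Sum>a'\<in>UNIV. (cmod (L a a'))^2) = 1" using part3 unfolding S1 by simp
  have C1: "unit_vec \<psi>"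
    unfolding unit_vec_def \<psi>_def sum_UNIV_pair using L1 by simp
  have C2: "psd M" unfolding M_def
    by (rule M_psd) (unfold Xs_def, rule Tdec_psd[OF pv])
  have C3: "psd (\<lambda>i j. qid i j - M i j)" unfolding M_def
  proof (rule M_le)
    show "psd_on (UNIV \<times> Xs) (Tdec Dec)" unfolding Xs_def by (rule Tdec_psd[OF pv])
    show "Re (qf (UNIV \<times> Xs) (Tdec Dec) h) \<le> (\<Sum>i\<in>UNIV \<times> Xs. (cmod (h i))\<^sup>2)" for h
      unfolding Xs_def by (rule Tdec_le[OF pv])
    show "(\<Sum>y\<in>Xs \<times> (UNIV \<times> Xs). (cmod (\<Sum>a'\<in>UNIV. G a' y * v a'))\<^sup>2) \<le> (\<Sum>a'\<in>UNIV. (cmod (v a'))\<^sup>2)" for v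
      using part2 by blast
  qed
  have C4: "Re (qtrace (qmult M (apply_first (N i) (ketbra \<psi>)))) \<ge> 1 - \<epsilon>" if i: "i \<in> {1..s}" for i
    unfolding M_def \<psi>_def Xs_def
    by (rule C4_lemma) (use assms(2) i assms(5) part1 err in \<open>auto simp: Xs_def\<close>)
  have C5: "Re (qtrace (qmult M (qtensor \<sigma> (ptrace1 (apply_first (N i) (ketbra \<psi>)))))) = 1 / real K"
    if i: "i \<in> {1..s}" and \<sigma>: "density \<sigma>" for i \<sigma>
    unfolding M_def \<psi>_def Xs_def
    by (rule C5_lemma) (use assms(2) i assms(5) encch pv u\<theta> part1 \<sigma> in \<open>auto simp: Xs_def\<close>)
  have RK: "R = log 2 (real K)"
  proof -
    have "log 2 (2 powr R) = R" by simp
    then show ?thesis using assms(6) by simp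
  qed
  have nl: "neglog2 (1 / real K) = ereal R"
    unfolding neglog2_def RK using assms(5) by (simp add: log_divide)
  have "ereal R \<le> (INF i \<in> {1..s}. IH \<epsilon> (apply_first (N i) (ketbra \<psi>)))"
  proof (rule INF_greatest)
    fix i assume i: "i \<in> {1..s}"
    show "ereal R \<le> IH \<epsilon> (apply_first (N i) (ketbra \<psi>))"
      unfolding IH_def
    proof (rule Inf_greatest)
      fix d assume "d \<in> {DH \<epsilon> (apply_first (N i) (ketbra \<psi>)) (qtensor \<sigma> (ptrace1 (apply_first (N i) (ketbra \<psi>)))) | \<sigma> :: 'b qop. density \<sigma>}"
      then obtain \<sigma> :: "'b qop" where \<sigma>: "density \<sigma>"
        and d: "d = DH \<epsilon> (apply_first (N i) (ketbra \<psi>)) (qtensor \<sigma> (ptrace1 (apply_first (N i) (ketbra \<psi>))))"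
        by blast
      have "neglog2 (Re (qtrace (qmult M (qtensor \<sigma> (ptrace1 (apply_first (N i) (ketbra \<psi>)))))))
         \<in> { neglog2 (Re (qtrace (qmult M' (qtensor \<sigma> (ptrace1 (apply_first (N i) (ketbra \<psi>))))))) | M'.
           psd M' \<and> psd (\<lambda>i j. qid i j - M' i j) \<and> Re (qtrace (qmult M' (apply_first (N i) (ketbra \<psi>)))) \<ge> 1 - \<epsilon> }"
        using C2 C3 C4[OF i] by blast
      then have "neglog2 (Re (qtrace (qmult M (qtensor \<sigma> (ptrace1 (apply_first (N i) (ketbra \<psi>))))))) \<le> d"
        unfolding d DH_def by (rule Sup_upper)
      then show "ereal R \<le> d" using C5[OF i \<sigma>] nl by simp
    qed
  qed
  then show ?thesis using C1 by (intro SUP_upper2[of \<psi>]) auto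
qed


end
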